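(* (i) If $0<c<1$ and $n$ is sufficiently large, then \[ \gamma(n,n^c)<\frac{1}{2\sqrt2}\,n^{1-c/2}. \] (ii) If $0<c<2/5$ and $\varepsilon>0$, then for $n$ sufficiently large, \[ \gamma(n,n^c)>\frac{1-\varepsilon}{2\sqrt2}\,n^{1-c/2}. \] Here $\gamma(n,n^c)$ denotes $\gamma(n,f)$ for the function $f(n)=n^c$.
   Context: A book of size $q$ is a set of $q$ triangles sharing a common edge; the booksize $bk(G)$ is the size of the largest book in $G$, i.e. the maximum over edges $uv$ of the number of common neighbours of $u$ and $v$. For a positive function $f$, $TG(n,f)$ is the set of all graphs $G$ with $n$ vertices and $m$ edges such that every edge of $G$ is contained in a triangle and $m>\max\{n^2/4-f(n)n,\,0\}$. Define $\gamma(n,f)=\min\{bk(G): G\in TG(n,f)\}$. *)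

theory Defs
  imports Complex_Main
begin

definition graph_on :: "nat \<Rightarrow> nat set set \<Rightarrow> bool" where
  "graph_on n E \<longleftrightarrow> (\<forall>e\<in>E. e \<subseteq> {0..<n} \<and> card e = 2)"

definition nbrs :: "nat set set \<Rightarrow> nat \<Rightarrow> nat set" where
  "nbrs E u = {v. {u, v} \<in> E}"

definition bk :: "nat set set \<Rightarrow> nat" where
  "bk E = Max ({card (nbrs E u \<inter> nbrs E v) | u v. {u, v} \<in> E \<and> u \<noteq> v} \<union> {0})"

definition every_edge_in_triangle :: "nat set set \<Rightarrow> bool" where
  "every_edge_in_triangle E \<longleftrightarrow>
     (\<forall>u v. {u, v} \<in> E \<longrightarrow> u \<noteq> v \<longrightarrow> (\<exists>w. {u, w} \<in> E \<and> {v, w} \<in> E))"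

definition TG :: "nat \<Rightarrow> (nat \<Rightarrow> real) \<Rightarrow> nat set set set" where
  "TG n f = {E. graph_on n E \<and> every_edge_in_triangle E \<and>
      real (card E) > max ((real n)\<^sup>2 / 4 - f n * real n) 0}"

definition gamma :: "nat \<Rightarrow> (nat \<Rightarrow> real) \<Rightarrow> nat" where
  "gamma n f = Min (bk ` TG n f)"

end

theory Submission
  imports Defs
begin


lemma perw:
  fixes G u q n h \<kappa> :: real
  assumes G0: "0 \<le> G" and Guq: "G \<le> u * q" and Gu2: "G \<le> u^2 / 2"
    and u0: "0 \<le> u" and un: "u \<le> n / 2" and h0: "0 < h" and hn: "h \<le> n"
    and qn: "8 * q \<le> n" and q3: "2 * n^2 \<le> q^3"
    and kdef: "\<kappa> = 2 * q^2 / (n - 4 * q)"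
  shows "G \<le> 2 * \<kappa> * (n / 2 - u) + \<kappa> * G * max 0 (u - 2 * q) / h"
proof -
  have npos: "0 < n" using h0 hn by linarith
  have q0: "0 < q"
  proof (rule ccontr)
    assume "\<not> 0 < q"
    then have "q^3 \<le> 0" by (simp add: power_le_zero_eq)
    moreover have "0 < 2 * n^2" using npos by simp
    ultimately show False using q3 by linarith
  qed
  have n4q: "0 < n - 4 * q" using qn q0 by linarith
  have kk: "\<kappa> * (n - 4 * q) = 2 * q^2" using kdef n4q by simp
  have k0: "0 \<le> \<kappa>" using kdef n4q by simp
  have kn: "\<kappa> * n \<ge> 2 * q^2"
  proof -
    have "\<kappa> * n \<ge> \<kappa> * (n - 4 * q)" using k0 q0 by (simp add: mult_left_mono)
    then show ?thesis using kk by simp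
  qed
  show ?thesis
  proof (cases "u \<le> 2 * q")
    case True
    have "G \<le> u^2 / 2" by (rule Gu2)
    also have "\<dots> \<le> (2*q)^2 / 2" using True u0 by (intro divide_right_mono power_mono) auto
    also have "\<dots> = 2 * q^2" by (simp add: power2_eq_square)
    also have "\<dots> = 2 * \<kappa> * (n / 2 - 2 * q)" using kk by (simp add: algebra_simps)
    also have "\<dots> \<le> 2 * \<kappa> * (n / 2 - u)" using True k0 by (intro mult_left_mono) auto
    finally show ?thesis using k0 G0 h0 by (simp add: add_increasing2 divide_nonneg_pos)
  next
    case False
    define t where "t = u - 2 * q"
    have t0: "0 < t" using False t_def by simp
    have mx: "max 0 (u - 2 * q) = t" using t0 t_def by simp
    have rhs0: "0 \<le> 2 * \<kappa> * (n / 2 - u)" using k0 un by simp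
    show ?thesis
    proof (cases "h \<le> \<kappa> * t")
      case True
      have "G \<le> G * (\<kappa> * t) / h" using True G0 h0
        by (simp add: field_simps mult_left_mono)
      then show ?thesis using mx rhs0 by (simp add: algebra_simps)
    next
      case False
      have pos: "0 < 1 - \<kappa> * t / h" using False h0 by (simp add: field_simps)
      have q2n: "q^2 \<ge> n"
      proof -
        have "q^3 \<ge> 2 * n^2" by (rule q3)
        have "q * q^2 \<ge> q * (2 * n)"
        proof -
          have "q * (2*n) \<le> n * (2*n)" using qn q0 npos by (intro mult_right_mono) auto
          also have "\<dots> = 2 * n^2" by (simp add: power2_eq_square)
          also have "\<dots> \<le> q^3" by (rule q3)
          also have "\<dots> = q * q^2" by (simp add: power3_eq_cube power2_eq_square)
          finally show ?thesis .
        qed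
        then have "q^2 \<ge> 2 * n" using q0 by simp
        then show ?thesis using npos by simp
      qed
      have key: "q * n \<le> 2 * \<kappa> * (q^2 - n)"
      proof -
        have "4 * q^3 \<ge> n^2 + 4 * q * n"
        proof -
          have "4 * q * n \<le> n * n / 2" using qn npos by (simp add: mult_right_mono)
          moreover have "0 \<le> n * n" by simp
          ultimately show ?thesis using q3 unfolding power2_eq_square by linarith
        qed
        then have A: "n * n \<le> 4 * q * (q^2 - n)" by (simp add: power2_eq_square power3_eq_cube algebra_simps)
        have B: "2 * (2 * q^2 / n) * (q^2 - n) \<le> 2 * \<kappa> * (q^2 - n)"
        proof -
          have "2 * q^2 / n \<le> \<kappa>" using kn npos by (simp add: field_simps)
          then show ?thesis using q2n by (intro mult_right_mono) auto
        qed
        have C: "2 * (2 * q^2 / n) * (q^2 - n) = (q / n) * (4 * q * (q^2 - n))"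
          by (simp add: field_simps power2_eq_square)
        have D: "(q / n) * (n * n) \<le> (q / n) * (4 * q * (q^2 - n))"
          using A q0 npos by (intro mult_left_mono) auto
        have E: "(q / n) * (n * n) = q * n" using npos by simp
        show ?thesis using B C D E by linarith
      qed
      have key2: "q + 2 * \<kappa> \<le> 2 * q^2 * \<kappa> / h"
      proof -
        have "q + 2 * \<kappa> \<le> 2 * q^2 * \<kappa> / n"
          using key npos by (simp add: field_simps algebra_simps)
        also have "\<dots> \<le> 2 * q^2 * \<kappa> / h" using h0 hn k0
          by (intro divide_left_mono) auto
        finally show ?thesis .
      qed
      have "G * (1 - \<kappa> * t / h) \<le> u * q * (1 - \<kappa> * t / h)"
        using Guq pos by (intro mult_right_mono) auto
      also have "\<dots> = u * q - u * q * \<kappa> * t / h" by (simp add: algebra_simps)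
      also have "\<dots> \<le> u * q - 2 * q * q * \<kappa> * t / h"
      proof -
        have "2 * q * q * \<kappa> * t \<le> u * q * \<kappa> * t"
          using False t_def q0 k0 t0 by (intro mult_right_mono) (auto simp: t_def)
        then show ?thesis using h0 by (simp add: divide_right_mono)
      qed
      also have "\<dots> = 2 * q^2 + t * q - t * (2 * q^2 * \<kappa> / h)"
        by (simp add: t_def power2_eq_square algebra_simps)
      also have "\<dots> \<le> 2 * q^2 + t * q - t * (q + 2 * \<kappa>)"
      proof -
        have "t * (q + 2 * \<kappa>) \<le> t * (2 * q^2 * \<kappa> / h)" using key2 t0 by (intro mult_left_mono) auto
        then show ?thesis by linarith
      qed
      also have "\<dots> = 2 * \<kappa> * (n / 2 - u)"
        using kk by (simp add: t_def algebra_simps)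
      finally have "G * (1 - \<kappa> * t / h) \<le> 2 * \<kappa> * (n / 2 - u)" .
      then show ?thesis using mx by (simp add: algebra_simps)
    qed
  qed
qed




locale sg =
  fixes V :: "nat set" and N :: "nat \<Rightarrow> nat set"
  assumes finV: "finite V" and NV: "N x \<subseteq> V" and symN: "y \<in> N x \<Longrightarrow> x \<in> N y"
    and irrN: "x \<notin> N x"
begin

lemma finN: "finite (N x)" using finV NV finite_subset by blast

lemma swapF:
  assumes "finite X" "finite Y"
  shows "(\<Sum>x\<in>X. \<Sum>y\<in>N x \<inter> Y. F x y) = (\<Sum>y\<in>Y. \<Sum>x\<in>N y \<inter> X. (F x y :: real))"
proof -
  have "(\<Sum>x\<in>X. \<Sum>y\<in>N x \<inter> Y. F x y) = (\<Sum>x\<in>X. \<Sum>y\<in>{y. y \<in> Y \<and> y \<in> N x}. F x y)"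
    by (intro sum.cong refl) auto
  also have "\<dots> = (\<Sum>y\<in>Y. \<Sum>x\<in>{x. x \<in> X \<and> y \<in> N x}. F x y)"
    by (rule sum.swap_restrict[OF assms])
  also have "\<dots> = (\<Sum>y\<in>Y. \<Sum>x\<in>N y \<inter> X. F x y)"
    by (intro sum.cong refl) (auto intro: symN)
  finally show ?thesis .
qed

lemma swap_card:
  assumes "finite X" "finite Y"
  shows "(\<Sum>x\<in>X. real (card (N x \<inter> Y))) = (\<Sum>y\<in>Y. real (card (N y \<inter> X)))"
  using swapF[OF assms, of "\<lambda>_ _. 1"] by simp

lemma cauchy:
  fixes g :: "nat \<Rightarrow> real"
  assumes "finite W"
  shows "(\<Sum>x\<in>W. g x)^2 \<le> real (card W) * (\<Sum>x\<in>W. (g x)^2)"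
proof (cases "W = {}")
  case True then show ?thesis by simp
next
  case False
  let ?k = "real (card W)" and ?S = "\<Sum>x\<in>W. g x"
  have k: "?k > 0" using False assms by (simp add: card_gt_0_iff)
  define c where "c = ?S / ?k"
  have "0 \<le> (\<Sum>x\<in>W. (g x - c)^2)" by (intro sum_nonneg) auto
  also have "(\<Sum>x\<in>W. (g x - c)^2) = (\<Sum>x\<in>W. (g x)^2 - 2 * c * g x + c^2)"
    by (intro sum.cong refl) (simp add: power2_diff)
  also have "\<dots> = (\<Sum>x\<in>W. (g x)^2) - 2 * c * ?S + ?k * c^2"
    by (simp add: sum.distrib sum_subtractf sum_distrib_left)
  also have "\<dots> = (\<Sum>x\<in>W. (g x)^2) - ?S^2 / ?k"
    using k by (simp add: c_def power2_eq_square field_simps)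
  finally have "?S^2 / ?k \<le> (\<Sum>x\<in>W. (g x)^2)" by simp
  then show ?thesis using k by (simp add: field_simps)
qed

lemma mantel_ref:
  fixes W :: "nat set" and z :: "nat \<Rightarrow> nat \<Rightarrow> real"
  assumes finW: "finite W"
    and hyp: "\<And>x y. x \<in> W \<Longrightarrow> y \<in> N x \<inter> W \<Longrightarrow>
         real (card (N x \<inter> W)) + real (card (N y \<inter> W)) + z x y \<le> real (card W)"
  shows "2 * (\<Sum>x\<in>W. real (card (N x \<inter> W)))^2
          + real (card W) * (\<Sum>x\<in>W. \<Sum>y\<in>N x \<inter> W. z x y)
         \<le> (real (card W))^2 * (\<Sum>x\<in>W. real (card (N x \<inter> W)))"
proof -
  define dW where "dW x = real (card (N x \<inter> W))" for x
  define S where "S = (\<Sum>x\<in>W. dW x)"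
  define Q where "Q = (\<Sum>x\<in>W. (dW x)^2)"
  define Z where "Z = (\<Sum>x\<in>W. \<Sum>y\<in>N x \<inter> W. z x y)"
  have finNW: "finite (N x \<inter> W)" for x using finW by simp
  have Q1: "Q = (\<Sum>x\<in>W. \<Sum>y\<in>N x \<inter> W. dW x)"
    unfolding Q_def dW_def by (simp add: power2_eq_square)
  have Q2: "Q = (\<Sum>x\<in>W. \<Sum>y\<in>N x \<inter> W. dW y)"
    unfolding Q_def using swapF[OF finW finW, of "\<lambda>x y. dW y"]
    by (simp add: dW_def power2_eq_square)
  have "2 * Q + Z = (\<Sum>x\<in>W. \<Sum>y\<in>N x \<inter> W. dW x + dW y + z x y)"
    unfolding Q1 Z_def using Q1 Q2 by (simp add: sum.distrib)
  also have "\<dots> \<le> (\<Sum>x\<in>W. \<Sum>y\<in>N x \<inter> W. real (card W))"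
    by (intro sum_mono) (use hyp in \<open>auto simp: dW_def\<close>)
  also have "\<dots> = real (card W) * S"
    by (simp add: S_def dW_def sum_distrib_left mult.commute)
  finally have A: "2 * Q + Z \<le> real (card W) * S" .
  have C: "S^2 \<le> real (card W) * Q" unfolding S_def Q_def by (rule cauchy[OF finW])
  have "2 * S^2 + real (card W) * Z \<le> real (card W) * (2 * Q + Z)"
    using C by (simp add: algebra_simps)
  also have "\<dots> \<le> real (card W) * (real (card W) * S)"
    using A by (intro mult_left_mono) auto
  finally show ?thesis unfolding S_def Z_def dW_def by (simp add: power2_eq_square algebra_simps)
qed


lemma card_three:
  assumes "finite X" "finite Y" "finite Z"
  shows "card X + card Y + card Z \<le> card (X \<union> Y \<union> Z) + card (X \<inter> Y) + card (X \<inter> Z) + card (Y \<inter> Z)"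
proof -
  have 1: "card (X \<union> Y) + card (X \<inter> Y) = card X + card Y" using card_Un_Int assms by metis
  have 2: "card ((X \<union> Y) \<union> Z) + card ((X \<union> Y) \<inter> Z) = card (X \<union> Y) + card Z"
    using card_Un_Int[of "X \<union> Y" Z] assms by simp
  have "(X \<union> Y) \<inter> Z = (X \<inter> Z) \<union> (Y \<inter> Z)" by blast
  then have 3: "card ((X \<union> Y) \<inter> Z) \<le> card (X \<inter> Z) + card (Y \<inter> Z)" by (simp add: card_Un_le)
  show ?thesis using 1 2 3 by linarith
qed

lemma sumsq:
  assumes book: "\<And>x y. y \<in> N x \<Longrightarrow> real (card (N x \<inter> N y)) \<le> q"
  shows "2 * (\<Sum>x\<in>V. (real (card (N x)))^2) \<le> (real (card V) + q) * (\<Sum>x\<in>V. real (card (N x)))"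
proof -
  define d where "d x = real (card (N x))" for x
  have NVi: "N x \<inter> V = N x" for x using NV by blast
  have Q1: "(\<Sum>x\<in>V. (d x)^2) = (\<Sum>x\<in>V. \<Sum>y\<in>N x \<inter> V. d x)"
    by (simp add: NVi d_def power2_eq_square)
  have Q2: "(\<Sum>x\<in>V. (d x)^2) = (\<Sum>x\<in>V. \<Sum>y\<in>N x \<inter> V. d y)"
    using swapF[OF finV finV, of "\<lambda>x y. d y"] by (simp add: NVi d_def power2_eq_square)
  have pair: "d x + d y \<le> real (card V) + q" if "y \<in> N x" for x y
  proof -
    have "card (N x) + card (N y) = card (N x \<union> N y) + card (N x \<inter> N y)"
      using card_Un_Int finN by metis
    moreover have "card (N x \<union> N y) \<le> card V" using NV finV by (intro card_mono) auto
    ultimately show ?thesis using book[OF that] unfolding d_def by linarith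
  qed
  have "2 * (\<Sum>x\<in>V. (d x)^2) = (\<Sum>x\<in>V. \<Sum>y\<in>N x \<inter> V. d x + d y)"
    using Q1 Q2 by (simp add: sum.distrib)
  also have "\<dots> \<le> (\<Sum>x\<in>V. \<Sum>y\<in>N x \<inter> V. real (card V) + q)"
    by (intro sum_mono pair) auto
  also have "\<dots> = (real (card V) + q) * (\<Sum>x\<in>V. d x)"
    by (simp add: NVi d_def sum_distrib_left mult.commute)
  finally show ?thesis unfolding d_def .
qed

end

locale sgq = sg +
  fixes q :: real
  assumes book: "\<And>x y. y \<in> N x \<Longrightarrow> real (card (N x \<inter> N y)) \<le> q"
    and tri: "\<And>x y. y \<in> N x \<Longrightarrow> \<exists>w. w \<in> N x \<inter> N y"
    and qsmall: "24 * q < real (card V)"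
    and q3: "2 * (real (card V))^2 \<le> q^3"
begin

definition "H = {v\<in>V. 3 * real (card V) / 8 \<le> real (card (N v))}"
definition "R = V - H"
definition "wit x y = (SOME w. w \<in> N x \<inter> N y)"
definition "u w = real (card (N w \<inter> H))"
definition "zf x y = real (card (H - (N x \<union> N y)))"
definition "Pairs = Sigma H (\<lambda>x. N x \<inter> H)"
definition "G w = real (card {p\<in>Pairs. wit (fst p) (snd p) = w})"
definition "phi w = max 0 (u w - 2 * q)"

lemma finH: "finite H" and finR: "finite R" and HV: "H \<subseteq> V" and RV: "R \<subseteq> V"
  and HR: "H \<inter> R = {}" and HRV: "H \<union> R = V"
  using finV by (auto simp: H_def R_def)

lemma q0: "0 < q"
proof (rule ccontr)
  assume nq: "\<not> 0 < q"
  show False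
  proof (cases "q = 0")
    case True
    then have "0 < real (card V)" using qsmall by simp
    then have "0 < 2 * (real (card V))^2" by simp
    then show False using q3 True by simp
  next
    case False
    then have "q < 0" using nq by simp
    then have "q^3 < 0" by (simp add: power_less_zero_eq)
    moreover have "0 \<le> 2 * (real (card V))^2" by simp
    ultimately show False using q3 by linarith
  qed
qed

lemma tri_free:
  assumes "x \<in> H" "y \<in> H" "w \<in> H" "y \<in> N x" "w \<in> N x" "w \<in> N y"
  shows False
proof -
  have c: "card (N x) + card (N y) + card (N w) \<le> card (N x \<union> N y \<union> N w) + card (N x \<inter> N y) + card (N x \<inter> N w) + card (N y \<inter> N w)"
    by (rule card_three[OF finN finN finN])
  have u: "card (N x \<union> N y \<union> N w) \<le> card V" using NV finV by (intro card_mono) auto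
  have b1: "real (card (N x \<inter> N y)) \<le> q" using book assms by blast
  have b2: "real (card (N x \<inter> N w)) \<le> q" using book assms by blast
  have b3: "real (card (N y \<inter> N w)) \<le> q" using book assms by blast
  have "3 * real (card V) / 8 \<le> real (card (N x))" "3 * real (card V) / 8 \<le> real (card (N y))"
    "3 * real (card V) / 8 \<le> real (card (N w))" using assms by (auto simp: H_def)
  then show False using c u b1 b2 b3 qsmall by linarith
qed

lemma wit_in:
  assumes "x \<in> H" "y \<in> N x \<inter> H"
  shows "wit x y \<in> N x \<inter> N y" "wit x y \<in> R"
proof -
  have ex: "\<exists>w. w \<in> N x \<inter> N y" using tri assms by blast
  show w: "wit x y \<in> N x \<inter> N y" unfolding wit_def using someI_ex[OF ex] .
  have "wit x y \<in> V" using w NV by blast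
  moreover have "wit x y \<notin> H" using tri_free[of x y "wit x y"] assms w by blast
  ultimately show "wit x y \<in> R" by (simp add: R_def)
qed

lemma finPairs: "finite Pairs" unfolding Pairs_def using finH by auto

lemma S_eq: "(\<Sum>x\<in>H. real (card (N x \<inter> H))) = (\<Sum>w\<in>R. G w)"
proof -
  have "(\<Sum>x\<in>H. real (card (N x \<inter> H))) = real (card Pairs)"
    unfolding Pairs_def using finH by (simp add: card_SigmaI)
  also have "\<dots> = (\<Sum>p\<in>Pairs. (1::real))" by simp
  also have "\<dots> = (\<Sum>w\<in>R. \<Sum>p\<in>{p. p \<in> Pairs \<and> wit (fst p) (snd p) = w}. (1::real))"
    by (rule sum.group[symmetric, OF finPairs finR]) (auto simp: Pairs_def intro: wit_in)
  also have "\<dots> = (\<Sum>w\<in>R. G w)" by (simp add: G_def)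
  finally show ?thesis .
qed

lemma Z_ge: "(\<Sum>w\<in>R. G w * phi w) \<le> (\<Sum>x\<in>H. \<Sum>y\<in>N x \<inter> H. zf x y)"
proof -
  have zge: "phi (wit x y) \<le> zf x y" if "x \<in> H" "y \<in> N x \<inter> H" for x y
  proof -
    define w where "w = wit x y"
    have w: "w \<in> N x \<inter> N y" using wit_in that by (simp add: w_def)
    define U where "U = N w \<inter> H"
    have finU: "finite U" using finH U_def by simp
    have "U \<subseteq> (U - (N x \<union> N y)) \<union> (U \<inter> N x) \<union> (U \<inter> N y)" by blast
    then have "card U \<le> card ((U - (N x \<union> N y)) \<union> (U \<inter> N x) \<union> (U \<inter> N y))"
      using finU by (intro card_mono) auto
    also have "\<dots> \<le> card (U - (N x \<union> N y)) + card (U \<inter> N x) + card (U \<inter> N y)"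
      by (meson card_Un_le add_le_mono le_refl order_trans)
    finally have c1: "card U \<le> card (U - (N x \<union> N y)) + card (U \<inter> N x) + card (U \<inter> N y)" .
    have c2: "card (U - (N x \<union> N y)) \<le> card (H - (N x \<union> N y))"
      using finH U_def by (intro card_mono) auto
    have c3: "real (card (U \<inter> N x)) \<le> q"
    proof -
      have "card (U \<inter> N x) \<le> card (N w \<inter> N x)" using finN U_def by (intro card_mono) auto
      moreover have "x \<in> N w" using w symN by blast
      then have "real (card (N w \<inter> N x)) \<le> q" using book by blast
      ultimately show ?thesis by linarith
    qed
    have c4: "real (card (U \<inter> N y)) \<le> q"
    proof -
      have "card (U \<inter> N y) \<le> card (N w \<inter> N y)" using finN U_def by (intro card_mono) auto
      moreover have "y \<in> N w" using w symN by blast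
      then have "real (card (N w \<inter> N y)) \<le> q" using book by blast
      ultimately show ?thesis by linarith
    qed
    have "u w - 2 * q \<le> zf x y" using c1 c2 c3 c4 unfolding u_def zf_def U_def[symmetric] by linarith
    moreover have "0 \<le> zf x y" by (simp add: zf_def)
    ultimately show ?thesis by (simp add: phi_def w_def)
  qed
  have "(\<Sum>w\<in>R. G w * phi w) = (\<Sum>w\<in>R. \<Sum>p\<in>{p. p \<in> Pairs \<and> wit (fst p) (snd p) = w}. phi (wit (fst p) (snd p)))"
    by (intro sum.cong refl) (simp add: G_def)
  also have "\<dots> = (\<Sum>p\<in>Pairs. phi (wit (fst p) (snd p)))"
    by (rule sum.group[OF finPairs finR]) (auto simp: Pairs_def intro: wit_in)
  also have "\<dots> \<le> (\<Sum>p\<in>Pairs. zf (fst p) (snd p))"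
    by (intro sum_mono) (auto simp: Pairs_def intro: zge)
  also have "\<dots> = (\<Sum>x\<in>H. \<Sum>y\<in>N x \<inter> H. zf x y)"
    unfolding Pairs_def by (subst sum.Sigma) (use finH in \<open>auto simp: split_beta\<close>)
  finally show ?thesis .
qed

lemma G_le:
  assumes "w \<in> R"
  shows "G w \<le> u w * q" "G w \<le> (u w)^2 / 2" "0 \<le> G w"
proof -
  define U where "U = N w \<inter> H"
  have finU: "finite U" using finH U_def by simp
  define SU where "SU = (\<Sum>x\<in>U. real (card (N x \<inter> U)))"
  have sub: "{p\<in>Pairs. wit (fst p) (snd p) = w} \<subseteq> Sigma U (\<lambda>x. N x \<inter> U)"
  proof
    fix p assume p: "p \<in> {p\<in>Pairs. wit (fst p) (snd p) = w}"
    obtain x y where xy: "p = (x, y)" by (cases p)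
    have x: "x \<in> H" and y: "y \<in> N x \<inter> H" and wx: "wit x y = w" using p xy by (auto simp: Pairs_def)
    have "w \<in> N x \<inter> N y" using wit_in[OF x y] wx by simp
    then have "x \<in> N w" "y \<in> N w" using symN by auto
    then show "p \<in> Sigma U (\<lambda>x. N x \<inter> U)" using x y xy U_def by auto
  qed
  have "G w \<le> real (card (Sigma U (\<lambda>x. N x \<inter> U)))"
    unfolding G_def using sub finU by (intro of_nat_mono card_mono) auto
  also have "\<dots> = SU" unfolding SU_def using finU by (simp add: card_SigmaI)
  finally have GS: "G w \<le> SU" .
  have "SU \<le> (\<Sum>x\<in>U. q)" unfolding SU_def
  proof (rule sum_mono)
    fix x assume x: "x \<in> U"
    have "card (N x \<inter> U) \<le> card (N x \<inter> N w)" using finN U_def by (intro card_mono) auto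
    moreover have "w \<in> N x" using x U_def symN by blast
    then have "real (card (N x \<inter> N w)) \<le> q" using book by blast
    ultimately show "real (card (N x \<inter> U)) \<le> q" by linarith
  qed
  also have "\<dots> = u w * q" by (simp add: u_def U_def)
  finally show "G w \<le> u w * q" using GS by linarith
  have M: "2 * SU^2 + real (card U) * (\<Sum>x\<in>U. \<Sum>y\<in>N x \<inter> U. (0::real)) \<le> (real (card U))^2 * SU"
    unfolding SU_def
  proof (rule mantel_ref[OF finU])
    fix x y assume x: "x \<in> U" and y: "y \<in> N x \<inter> U"
    have disj: "(N x \<inter> U) \<inter> (N y \<inter> U) = {}"
    proof (rule ccontr)
      assume "(N x \<inter> U) \<inter> (N y \<inter> U) \<noteq> {}"
      then obtain v where "v \<in> N x" "v \<in> N y" "v \<in> U" by blast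
      then show False using tri_free[of x y v] x y U_def by blast
    qed
    have "card (N x \<inter> U) + card (N y \<inter> U) = card ((N x \<inter> U) \<union> (N y \<inter> U))"
      using disj finU by (simp add: card_Un_disjoint)
    also have "\<dots> \<le> card U" using finU by (intro card_mono) auto
    finally show "real (card (N x \<inter> U)) + real (card (N y \<inter> U)) + 0 \<le> real (card U)" by linarith
  qed
  have SU0: "0 \<le> SU" unfolding SU_def by (intro sum_nonneg) auto
  have "SU \<le> (real (card U))^2 / 2"
  proof (cases "SU = 0")
    case True then show ?thesis by simp
  next
    case False
    then have "0 < SU" using SU0 by simp
    moreover have "SU * (2 * SU) \<le> SU * (real (card U))^2" using M by (simp add: power2_eq_square algebra_simps)
    ultimately have "2 * SU \<le> (real (card U))^2" by simp
    then show ?thesis by simp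
  qed
  then show "G w \<le> (u w)^2 / 2" using GS by (simp add: u_def U_def)
  show "0 \<le> G w" by (simp add: G_def)
qed

lemma core:
  defines "nn \<equiv> real (card V)" and "m \<equiv> (\<Sum>x\<in>V. real (card (N x))) / 2"
  shows "\<exists>r. 0 \<le> r \<and> (0 \<le> 2*m/nn - 3*nn/8 \<longrightarrow> r * (2*m/nn - 3*nn/8)^2 \<le> m*(nn+q) - 4*m^2/nn)
        \<and> r*nn/4 - 3*r^2/2 \<le> 2*(nn^2/4 - m)
        \<and> 2*m - r*nn - r^2 \<le> (2*q^2/(nn - 4*q)) * (2*(nn^2/4 - m) + 3*r^2/2)"
proof -
  define d where "d x = real (card (N x))" for x
  define r where "r = real (card R)"
  define hh where "hh = real (card H)"
  define S where "S = (\<Sum>x\<in>H. real (card (N x \<inter> H)))"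
  define Z where "Z = (\<Sum>x\<in>H. \<Sum>y\<in>N x \<inter> H. zf x y)"
  define A where "A = (\<Sum>w\<in>R. nn/2 - u w)"
  define \<kappa> where "\<kappa> = 2*q^2/(nn - 4*q)"
  have nnpos: "0 < nn" using qsmall q0 nn_def by linarith
  have hr: "hh + r = nn" unfolding hh_def r_def nn_def
    using card_Un_disjoint[OF finH finR HR] HRV by simp
  have r0: "0 \<le> r" by (simp add: r_def)
  have hh0: "0 \<le> hh" by (simp add: hh_def)
  have S0: "0 \<le> S" unfolding S_def by (intro sum_nonneg) auto
  have Z0: "0 \<le> Z" unfolding Z_def by (intro sum_nonneg) (auto simp: zf_def)
  have k0: "0 \<le> \<kappa>" unfolding \<kappa>_def using qsmall q0 nn_def by simp
  have lowR: "d w < 3*nn/8" if "w \<in> R" for w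
    using that by (auto simp: R_def H_def d_def nn_def)
  have ud: "u w \<le> d w" for w unfolding u_def d_def using finN by (simp add: card_mono)
  have u0: "0 \<le> u w" for w by (simp add: u_def)
  have dsplit: "d x = real (card (N x \<inter> H)) + real (card (N x \<inter> R))" for x
  proof -
    have "N x = (N x \<inter> H) \<union> (N x \<inter> R)" using NV HRV by blast
    then have "card (N x) = card ((N x \<inter> H) \<union> (N x \<inter> R))" by simp
    also have "\<dots> = card (N x \<inter> H) + card (N x \<inter> R)"
      by (rule card_Un_disjoint) (use finN HR in auto)
    finally show ?thesis by (simp add: d_def)
  qed
  have sumV: "(\<Sum>x\<in>V. d x) = (\<Sum>x\<in>H. d x) + (\<Sum>x\<in>R. d x)"
    using sum.union_disjoint[OF finH finR HR, of d] HRV by simp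
  have sumH: "(\<Sum>x\<in>H. d x) = S + (\<Sum>w\<in>R. u w)"
  proof -
    have "(\<Sum>x\<in>H. d x) = S + (\<Sum>x\<in>H. real (card (N x \<inter> R)))"
      by (simp add: dsplit sum.distrib S_def)
    also have "(\<Sum>x\<in>H. real (card (N x \<inter> R))) = (\<Sum>w\<in>R. real (card (N w \<inter> H)))"
      by (rule swap_card[OF finH finR])
    finally show ?thesis by (simp add: u_def)
  qed
  have sumR: "(\<Sum>x\<in>R. d x) \<le> (\<Sum>w\<in>R. u w) + r^2"
  proof -
    have "(\<Sum>x\<in>R. d x) = (\<Sum>w\<in>R. u w) + (\<Sum>x\<in>R. real (card (N x \<inter> R)))"
      by (simp add: dsplit sum.distrib u_def)
    also have "(\<Sum>x\<in>R. real (card (N x \<inter> R))) \<le> (\<Sum>x\<in>R. r)"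
      by (intro sum_mono) (use finR in \<open>auto simp: r_def card_mono\<close>)
    also have "(\<Sum>x\<in>R. r) = r^2" by (simp add: r_def power2_eq_square)
    finally show ?thesis by simp
  qed
  have sumu: "(\<Sum>w\<in>R. u w) = r*nn/2 - A"
    by (simp add: A_def sum_subtractf r_def)
  have E1: "2*m \<le> S + r*nn - 2*A + r^2"
    using sumV sumH sumR sumu unfolding m_def d_def by linarith
  have Abig: "r*nn/8 \<le> A"
  proof -
    have "(\<Sum>w\<in>R. nn/8) \<le> A" unfolding A_def
    proof (intro sum_mono)
      fix w assume "w \<in> R"
      then show "nn/8 \<le> nn/2 - u w" using lowR[of w] ud[of w] by linarith
    qed
    then show ?thesis by (simp add: r_def)
  qed
  have M: "2 * S^2 + hh * Z \<le> hh^2 * S"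
    unfolding S_def Z_def hh_def
  proof (rule mantel_ref[OF finH])
    fix x y assume x: "x \<in> H" and y: "y \<in> N x \<inter> H"
    have disj: "(N x \<inter> H) \<inter> (N y \<inter> H) = {}"
    proof (rule ccontr)
      assume "(N x \<inter> H) \<inter> (N y \<inter> H) \<noteq> {}"
      then obtain v where "v \<in> N x" "v \<in> N y" "v \<in> H" by blast
      then show False using tri_free[of x y v] x y by blast
    qed
    have "card (N x \<inter> H) + card (N y \<inter> H) + card (H - (N x \<union> N y))
        = card ((N x \<inter> H) \<union> (N y \<inter> H) \<union> (H - (N x \<union> N y)))"
    proof -
      have a: "card ((N x \<inter> H) \<union> (N y \<inter> H)) = card (N x \<inter> H) + card (N y \<inter> H)"
        using disj finH by (intro card_Un_disjoint) auto
      have b: "card (((N x \<inter> H) \<union> (N y \<inter> H)) \<union> (H - (N x \<union> N y)))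
          = card ((N x \<inter> H) \<union> (N y \<inter> H)) + card (H - (N x \<union> N y))"
        using finH by (intro card_Un_disjoint) auto
      show ?thesis using a b by simp
    qed
    also have "\<dots> \<le> card H" using finH by (intro card_mono) auto
    finally show "real (card (N x \<inter> H)) + real (card (N y \<inter> H)) + zf x y \<le> real (card H)"
      unfolding zf_def by linarith
  qed
  have SZ: "S \<le> hh^2/2 - (if hh = 0 then 0 else Z/hh)"
  proof (cases "hh = 0")
    case True
    then have "H = {}" using finH by (simp add: hh_def)
    then show ?thesis by (simp add: S_def True)
  next
    case False
    then have hp: "0 < hh" using hh0 by simp
    have "2 * S^2 \<le> hh^2 * S" using M Z0 hh0 by (smt (verit) mult_nonneg_nonneg)
    then have Sh: "S \<le> hh^2/2"
    proof (cases "S = 0")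
      case True then show ?thesis by simp
    next
      case False
      then have "0 < S" using S0 by simp
      moreover have "S * (2*S) \<le> S * hh^2" using \<open>2 * S^2 \<le> hh^2 * S\<close> by (simp add: power2_eq_square algebra_simps)
      ultimately show ?thesis by simp
    qed
    have "hh * Z \<le> S * (hh^2 - 2*S)" using M by (simp add: algebra_simps power2_eq_square)
    also have "\<dots> \<le> (hh^2/2) * (hh^2 - 2*S)" using Sh by (intro mult_right_mono) auto
    finally have "hh * Z \<le> hh * (hh * (hh^2/2 - S))" by (simp add: power2_eq_square algebra_simps)
    then have "Z \<le> hh * (hh^2/2 - S)" using hp by simp
    then have "Z / hh \<le> hh^2/2 - S" using hp by (simp add: field_simps)
    then show ?thesis using False by simp
  qed
  have SK: "S \<le> \<kappa> * (2*A + (if hh = 0 then 0 else Z/hh))"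
  proof (cases "hh = 0")
    case True
    then have "H = {}" using finH by (simp add: hh_def)
    then have "S = 0" by (simp add: S_def)
    moreover have "0 \<le> A" using Abig r0 nnpos by (smt (verit) divide_nonneg_pos mult_nonneg_nonneg)
    ultimately show ?thesis using True k0 by simp
  next
    case False
    then have hp: "0 < hh" using hh0 by simp
    have "S = (\<Sum>w\<in>R. G w)" unfolding S_def by (rule S_eq)
    also have "\<dots> \<le> (\<Sum>w\<in>R. 2 * \<kappa> * (nn/2 - u w) + \<kappa> * G w * phi w / hh)"
    proof (intro sum_mono)
      fix w assume w: "w \<in> R"
      show "G w \<le> 2 * \<kappa> * (nn/2 - u w) + \<kappa> * G w * phi w / hh"
        unfolding phi_def
      proof (rule perw)
        show "0 \<le> G w" "G w \<le> u w * q" "G w \<le> (u w)^2 / 2" using G_le[OF w] by auto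
        show "0 \<le> u w" by (rule u0)
        show "u w \<le> nn / 2" using lowR[OF w] ud[of w] nnpos by linarith
        show "0 < hh" by (rule hp)
        show "hh \<le> nn" using hr r0 by linarith
        show "8 * q \<le> nn" using qsmall q0 nn_def by linarith
        show "2 * nn^2 \<le> q^3" using q3 nn_def by simp
        show "\<kappa> = 2 * q^2 / (nn - 4 * q)" by (simp add: \<kappa>_def)
      qed
    qed
    also have "\<dots> = 2 * \<kappa> * A + \<kappa> * (\<Sum>w\<in>R. G w * phi w) / hh"
    proof -
      have "(\<Sum>w\<in>R. 2 * \<kappa> * (nn/2 - u w) + \<kappa> * G w * phi w / hh)
          = (\<Sum>w\<in>R. 2 * \<kappa> * (nn/2 - u w)) + (\<Sum>w\<in>R. \<kappa> * G w * phi w / hh)"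
        by (rule sum.distrib)
      also have "(\<Sum>w\<in>R. 2 * \<kappa> * (nn/2 - u w)) = 2 * \<kappa> * A"
        by (simp add: A_def sum_distrib_left)
      also have "(\<Sum>w\<in>R. \<kappa> * G w * phi w / hh) = \<kappa> * (\<Sum>w\<in>R. G w * phi w) / hh"
        by (simp add: sum_distrib_left sum_divide_distrib mult.assoc)
      finally show ?thesis .
    qed
    also have "\<dots> \<le> 2 * \<kappa> * A + \<kappa> * Z / hh"
      using Z_ge k0 hp unfolding Z_def by (simp add: divide_right_mono mult_left_mono)
    finally show ?thesis using False by (simp add: algebra_simps)
  qed
  have VAR: "0 \<le> 2*m/nn - 3*nn/8 \<longrightarrow> r * (2*m/nn - 3*nn/8)^2 \<le> m*(nn+q) - 4*m^2/nn"
  proof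
    define a where "a = 2*m/nn"
    define th where "th = 2*m/nn - 3*nn/8"
    assume th0: "0 \<le> 2*m/nn - 3*nn/8"
    have sd: "(\<Sum>x\<in>V. d x) = 2*m" by (simp add: m_def d_def)
    have "r * th^2 = (\<Sum>w\<in>R. th^2)" by (simp add: r_def)
    also have "\<dots> \<le> (\<Sum>w\<in>R. (d w - a)^2)"
    proof (intro sum_mono)
      fix w assume "w \<in> R"
      then have "th \<le> a - d w" using lowR unfolding th_def a_def by fastforce
      moreover have "0 \<le> th" using th0 th_def by simp
      ultimately have "th^2 \<le> (a - d w)^2" by (intro power_mono) auto
      then show "th^2 \<le> (d w - a)^2" by (simp add: power2_commute)
    qed
    also have "\<dots> \<le> (\<Sum>w\<in>V. (d w - a)^2)"
      by (rule sum_mono2[OF finV RV]) auto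
    also have "(\<Sum>w\<in>V. (d w - a)^2) = (\<Sum>w\<in>V. (d w)^2 - 2 * a * d w + a^2)"
      by (intro sum.cong refl) (simp add: power2_diff)
    also have "\<dots> = (\<Sum>w\<in>V. (d w)^2) - 2 * a * (2*m) + nn * a^2"
      by (simp add: sum.distrib sum_subtractf sum_distrib_left[symmetric] sd nn_def)
    also have "\<dots> = (\<Sum>w\<in>V. (d w)^2) - 4*m^2/nn"
      using nnpos by (simp add: a_def power2_eq_square field_simps)
    also have "\<dots> \<le> m*(nn+q) - 4*m^2/nn"
      using sumsq[OF book] sd unfolding d_def nn_def by (simp add: algebra_simps)
    finally show "r * (2*m/nn - 3*nn/8)^2 \<le> m*(nn+q) - 4*m^2/nn" by (simp add: th_def)
  qed
  define Y where "Y = (if hh = 0 then 0 else Z/hh)"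
  have Y0: "0 \<le> Y" using Z0 hh0 by (simp add: Y_def)
  have hh_eq: "hh = nn - r" using hr by simp
  have E2: "2*m \<le> nn^2/2 + 3*r^2/2 - 2*A - Y"
  proof -
    have "2*m \<le> (nn-r)^2/2 - Y + r*nn - 2*A + r^2" using E1 SZ hh_eq unfolding Y_def by simp
    moreover have "(nn-r)^2/2 + r*nn + r^2 = nn^2/2 + 3*r^2/2" by (simp add: power2_eq_square field_simps)
    ultimately show ?thesis by linarith
  qed
  have O2: "r*nn/4 - 3*r^2/2 \<le> 2*(nn^2/4 - m)" using E2 Abig Y0 by simp
  have O3: "2*m - r*nn - r^2 \<le> \<kappa> * (2*(nn^2/4 - m) + 3*r^2/2)"
  proof -
    have "0 \<le> r*nn/8" using r0 nnpos by simp
    then have "2*m - r*nn - r^2 \<le> S" using E1 Abig by linarith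
    also have "\<dots> \<le> \<kappa> * (2*A + Y)" using SK by (simp add: Y_def)
    also have "\<dots> \<le> \<kappa> * (2*(nn^2/4 - m) + 3*r^2/2)" using E2 k0 by (intro mult_left_mono) auto
    finally show ?thesis .
  qed
  show ?thesis using r0 VAR O2 O3 unfolding \<kappa>_def by blast
qed

end




lemma edge_props:
  assumes "graph_on n E" "{u, v} \<in> E"
  shows "u \<noteq> v" "u < n" "v < n"
proof -
  have c: "card {u, v} = 2" and s: "{u, v} \<subseteq> {0..<n}" using assms by (auto simp: graph_on_def)
  show "u \<noteq> v" using c by (cases "u = v") auto
  show "u < n" "v < n" using s by auto
qed

lemma sg_graph:
  assumes "graph_on n E"
  shows "sg {..<n} (nbrs E)"
proof
  show "finite {..<n}" by simp
  show "nbrs E x \<subseteq> {..<n}" for x using edge_props[OF assms] by (auto simp: nbrs_def)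
  show "y \<in> nbrs E x \<Longrightarrow> x \<in> nbrs E y" for x y by (simp add: nbrs_def insert_commute)
  show "x \<notin> nbrs E x" for x using edge_props[OF assms, of x x] by (auto simp: nbrs_def)
qed

lemma finE:
  assumes "graph_on n E" shows "finite E"
proof -
  have "E \<subseteq> Pow {0..<n}" using assms by (auto simp: graph_on_def)
  then show ?thesis by (rule finite_subset) simp
qed

lemma handshake:
  assumes g: "graph_on n E"
  shows "(\<Sum>x<n. card (nbrs E x)) = 2 * card E"
proof -
  have fE: "finite E" by (rule finE[OF g])
  have ce: "card e = (\<Sum>x<n. if x \<in> e then 1 else 0)" if "e \<in> E" for e
  proof -
    have "e \<subseteq> {..<n}" using g that unfolding graph_on_def by fastforce
    then have "e = {..<n} \<inter> e" by blast
    then have "card e = card ({..<n} \<inter> e)" by simp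
    also have "\<dots> = (\<Sum>x\<in>{..<n} \<inter> e. 1)" by simp
    also have "\<dots> = (\<Sum>x<n. if x \<in> e then 1 else 0)" by (rule sum.inter_restrict) simp
    finally show ?thesis .
  qed
  have cx: "(\<Sum>e\<in>E. if x \<in> e then 1 else 0) = card (nbrs E x)" for x
  proof -
    have "(\<Sum>e\<in>E. if x \<in> e then 1 else (0::nat)) = card (E \<inter> {e. x \<in> e})"
      using sum.inter_restrict[OF fE, of "\<lambda>_. 1::nat" "{e. x \<in> e}"] by simp
    also have "card (E \<inter> {e. x \<in> e}) = card (nbrs E x)"
    proof (rule bij_betw_same_card[symmetric])
      show "bij_betw (\<lambda>v. {x, v}) (nbrs E x) (E \<inter> {e. x \<in> e})"
      proof (rule bij_betwI')
        fix v w assume "v \<in> nbrs E x" "w \<in> nbrs E x"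
        show "({x, v} = {x, w}) = (v = w)"
          using edge_props[OF g] \<open>v \<in> nbrs E x\<close> \<open>w \<in> nbrs E x\<close>
          by (auto simp: nbrs_def doubleton_eq_iff)
      next
        fix v assume "v \<in> nbrs E x"
        then show "{x, v} \<in> E \<inter> {e. x \<in> e}" by (simp add: nbrs_def)
      next
        fix e assume e: "e \<in> E \<inter> {e. x \<in> e}"
        then have "card e = 2" using g by (auto simp: graph_on_def)
        then obtain a b where ab: "e = {a, b}" "a \<noteq> b" by (auto simp: card_2_iff)
        then have "x = a \<or> x = b" using e by auto
        then show "\<exists>v\<in>nbrs E x. e = {x, v}"
        proof
          assume "x = a" then show ?thesis using ab e by (auto simp: nbrs_def)
        next
          assume "x = b" then show ?thesis using ab e by (auto simp: nbrs_def insert_commute)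
        qed
      qed
    qed
    finally show ?thesis .
  qed
  have "(\<Sum>e\<in>E. card e) = (\<Sum>e\<in>E. 2)" using g by (intro sum.cong refl) (auto simp: graph_on_def)
  then have "2 * card E = (\<Sum>e\<in>E. card e)" by simp
  also have "\<dots> = (\<Sum>e\<in>E. \<Sum>x<n. if x \<in> e then 1 else 0)" by (intro sum.cong refl ce)
  also have "\<dots> = (\<Sum>x<n. \<Sum>e\<in>E. if x \<in> e then 1 else 0)" by (rule sum.swap)
  also have "\<dots> = (\<Sum>x<n. card (nbrs E x))" by (simp add: cx)
  finally show ?thesis by simp
qed

lemma bk_fin:
  assumes g: "graph_on n E"
  shows "finite ({card (nbrs E u \<inter> nbrs E v) | u v. {u, v} \<in> E \<and> u \<noteq> v} \<union> {0})"
proof -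
  have "{card (nbrs E u \<inter> nbrs E v) | u v. {u, v} \<in> E \<and> u \<noteq> v}
      \<subseteq> (\<lambda>p. card (nbrs E (fst p) \<inter> nbrs E (snd p))) ` ({..<n} \<times> {..<n})"
  proof
    fix z assume "z \<in> {card (nbrs E u \<inter> nbrs E v) | u v. {u, v} \<in> E \<and> u \<noteq> v}"
    then obtain u v where z: "z = card (nbrs E u \<inter> nbrs E v)" and e: "{u, v} \<in> E" by auto
    have "(u, v) \<in> {..<n} \<times> {..<n}" using edge_props[OF g e] by simp
    then show "z \<in> (\<lambda>p. card (nbrs E (fst p) \<inter> nbrs E (snd p))) ` ({..<n} \<times> {..<n})"
      using z by (intro image_eqI[where x="(u, v)"]) auto
  qed
  moreover have "finite ((\<lambda>p. card (nbrs E (fst p) \<inter> nbrs E (snd p))) ` ({..<n} \<times> {..<n}))" by simp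
  ultimately have "finite {card (nbrs E u \<inter> nbrs E v) | u v. {u, v} \<in> E \<and> u \<noteq> v}"
    by (rule finite_subset)
  then show ?thesis by (rule finite_UnI) simp
qed

lemma bk_ge:
  assumes g: "graph_on n E" and e: "{u, v} \<in> E"
  shows "card (nbrs E u \<inter> nbrs E v) \<le> bk E"
proof -
  have "u \<noteq> v" using edge_props[OF g e] by simp
  then have "card (nbrs E u \<inter> nbrs E v) \<in> {card (nbrs E u \<inter> nbrs E v) | u v. {u, v} \<in> E \<and> u \<noteq> v} \<union> {0}"
    using e by auto
  then show ?thesis unfolding bk_def by (rule Max_ge[OF bk_fin[OF g]])
qed

lemma bk_le:
  assumes g: "graph_on n E" and b: "\<And>u v. {u, v} \<in> E \<Longrightarrow> card (nbrs E u \<inter> nbrs E v) \<le> B"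
  shows "bk E \<le> B"
  unfolding bk_def using b by (subst Max_le_iff[OF bk_fin[OF g]]) auto

lemma lower_graph:
  fixes q :: real
  assumes g: "graph_on n E" and t: "every_edge_in_triangle E"
    and book: "\<forall>u v. {u, v} \<in> E \<longrightarrow> real (card (nbrs E u \<inter> nbrs E v)) \<le> q"
    and qs: "24 * q < real n" and q3: "2 * (real n)^2 \<le> q^3"
  defines "m \<equiv> real (card E)"
  shows "\<exists>r. 0 \<le> r \<and> (0 \<le> 2*m/real n - 3*real n/8 \<longrightarrow> r * (2*m/real n - 3*real n/8)^2 \<le> m*(real n+q) - 4*m^2/real n)
        \<and> r*real n/4 - 3*r^2/2 \<le> 2*((real n)^2/4 - m)
        \<and> 2*m - r*real n - r^2 \<le> (2*q^2/(real n - 4*q)) * (2*((real n)^2/4 - m) + 3*r^2/2)"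
proof -
  interpret sg "{..<n}" "nbrs E" by (rule sg_graph[OF g])
  interpret sgq "{..<n}" "nbrs E" q
  proof
    show "y \<in> nbrs E x \<Longrightarrow> real (card (nbrs E x \<inter> nbrs E y)) \<le> q" for x y
      using book by (simp add: nbrs_def)
    show "y \<in> nbrs E x \<Longrightarrow> \<exists>w. w \<in> nbrs E x \<inter> nbrs E y" for x y
    proof -
      assume y: "y \<in> nbrs E x"
      then have e: "{x, y} \<in> E" by (simp add: nbrs_def)
      have "x \<noteq> y" using edge_props[OF g e] by simp
      then obtain w where "{x, w} \<in> E" "{y, w} \<in> E" using t e unfolding every_edge_in_triangle_def by blast
      then show ?thesis by (auto simp: nbrs_def)
    qed
    show "24 * q < real (card {..<n})" using qs by simp
    show "2 * (real (card {..<n}))^2 \<le> q^3" using q3 by simp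
  qed
  have m: "(\<Sum>x\<in>{..<n}. real (card (nbrs E x))) / 2 = m"
  proof -
    have "(\<Sum>x\<in>{..<n}. real (card (nbrs E x))) = real (\<Sum>x<n. card (nbrs E x))" by simp
    also have "\<dots> = 2 * m" using handshake[OF g] by (simp add: m_def)
    finally show ?thesis by simp
  qed
  show ?thesis using core m by simp
qed

lemma m_le:
  assumes g: "graph_on n E"
  shows "real (card E) \<le> (real n)^2 / 2"
proof -
  have "(\<Sum>x<n. card (nbrs E x)) \<le> (\<Sum>x<n. n)"
  proof (intro sum_mono)
    fix x assume "x \<in> {..<n}"
    have "nbrs E x \<subseteq> {..<n}" using edge_props[OF g] by (auto simp: nbrs_def)
    then show "card (nbrs E x) \<le> n" using card_mono[of "{..<n}" "nbrs E x"] by simp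
  qed
  then have "2 * card E \<le> n * n" using handshake[OF g] by simp
  then have "2 * real (card E) \<le> real n * real n" by (metis of_nat_le_iff of_nat_mult of_nat_numeral)
  then show ?thesis by (simp add: power2_eq_square)
qed




definition "cA k a = {k*k ..< k*k + a}"
definition "cB n k a = {k*k + a ..< (n::nat)}"
definition "cW k = {..< k*k}"
definition "cadj n k a u v \<longleftrightarrow>
   (u \<in> cA k a \<and> v \<in> cB n k a) \<or> (v \<in> cA k a \<and> u \<in> cB n k a)
 \<or> (u \<in> cW k \<and> v \<in> cA k a \<and> u div k = (v - k*k) mod k)
 \<or> (v \<in> cW k \<and> u \<in> cA k a \<and> v div k = (u - k*k) mod k)
 \<or> (u \<in> cW k \<and> v \<in> cB n k a \<and> u mod k = (v - k*k - a) mod k)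
 \<or> (v \<in> cW k \<and> u \<in> cB n k a \<and> v mod k = (u - k*k - a) mod k)"
definition "cE n k a = {{u, v} | u v. cadj n k a u v}"

lemma cadj_sym: "cadj n k a u v = cadj n k a v u"
  unfolding cadj_def by blast

lemma nbrs_cE: "nbrs (cE n k a) u = {v. cadj n k a u v}"
proof -
  have "{u, v} \<in> cE n k a \<longleftrightarrow> cadj n k a u v" for v
  proof
    assume "{u, v} \<in> cE n k a"
    then obtain u' v' where "{u, v} = {u', v'}" "cadj n k a u' v'" by (auto simp: cE_def)
    then show "cadj n k a u v" using cadj_sym by (auto simp: doubleton_eq_iff)
  next
    assume "cadj n k a u v" then show "{u, v} \<in> cE n k a" by (auto simp: cE_def)
  qed
  then show ?thesis by (auto simp: nbrs_def)
qed

lemma cadj_props: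
  assumes "cadj n k a u v" "k*k + a \<le> n"
  shows "u \<noteq> v" "u < n" "v < n"
  using assms unfolding cadj_def cA_def cB_def cW_def by auto

lemma c_graph:
  assumes "k*k + a \<le> n"
  shows "graph_on n (cE n k a)"
  unfolding graph_on_def
proof
  fix e assume "e \<in> cE n k a"
  then obtain u v where e: "e = {u, v}" and c: "cadj n k a u v" by (auto simp: cE_def)
  show "e \<subseteq> {0..<n} \<and> card e = 2" using cadj_props[OF c assms] e by auto
qed

lemma cadj_AB: "u \<in> cA k a \<Longrightarrow> v \<in> cB n k a \<Longrightarrow> cadj n k a u v"
  unfolding cadj_def by blast
lemma cadj_WA: "w \<in> cW k \<Longrightarrow> x \<in> cA k a \<Longrightarrow> w div k = (x - k*k) mod k \<Longrightarrow> cadj n k a w x"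
  unfolding cadj_def by blast
lemma cadj_WB: "w \<in> cW k \<Longrightarrow> y \<in> cB n k a \<Longrightarrow> w mod k = (y - k*k - a) mod k \<Longrightarrow> cadj n k a w y"
  unfolding cadj_def by blast

lemma c_tri:
  assumes kpos: "0 < k" and ka: "k \<le> a" and kb: "k \<le> n - k*k - a" and nn: "k*k + a \<le> n"
  shows "every_edge_in_triangle (cE n k a)"
proof -
  have main: "\<exists>w. cadj n k a u w \<and> cadj n k a v w" if c: "cadj n k a u v" for u v
  proof -
    have c1: "\<exists>w. cadj n k a u w \<and> cadj n k a v w" if u: "u \<in> cA k a" and v: "v \<in> cB n k a" for u v
    proof -
      define i where "i = (u - k*k) mod k"
      define j where "j = (v - k*k - a) mod k"
      have i: "i < k" "j < k" using kpos by (auto simp: i_def j_def)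
      define w where "w = i * k + j"
      have "Suc i * k \<le> k * k" using i by (intro mult_le_mono1) simp
      then have wW: "w \<in> cW k" using i by (simp add: w_def cW_def)
      have wd: "w div k = i" "w mod k = j" using i by (auto simp: w_def)
      have "cadj n k a w u" using cadj_WA[OF wW u] wd by (simp add: i_def)
      moreover have "cadj n k a w v" using cadj_WB[OF wW v] wd by (simp add: j_def)
      ultimately show ?thesis using cadj_sym by blast
    qed
    have c2: "\<exists>w. cadj n k a u w \<and> cadj n k a v w"
      if u: "u \<in> cW k" and v: "v \<in> cA k a" and e: "u div k = (v - k*k) mod k" for u v
    proof -
      define w where "w = k*k + a + u mod k"
      have "u mod k < k" using kpos by simp
      then have wB: "w \<in> cB n k a" using kb nn by (auto simp: w_def cB_def)
      have "(w - k*k - a) mod k = u mod k" by (simp add: w_def)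
      then have "cadj n k a u w" using cadj_WB[OF u wB] by simp
      moreover have "cadj n k a v w" using cadj_AB[OF v wB] .
      ultimately show ?thesis by blast
    qed
    have c3: "\<exists>w. cadj n k a u w \<and> cadj n k a v w"
      if u: "u \<in> cW k" and v: "v \<in> cB n k a" and e: "u mod k = (v - k*k - a) mod k" for u v
    proof -
      define w where "w = k*k + u div k"
      have "u div k < k" using u by (simp add: cW_def less_mult_imp_div_less)
      then have wA: "w \<in> cA k a" using ka by (auto simp: w_def cA_def)
      have "(w - k*k) mod k = u div k" using \<open>u div k < k\<close> by (simp add: w_def)
      then have "cadj n k a u w" using cadj_WA[OF u wA] by simp
      moreover have "cadj n k a v w" using cadj_AB[OF wA v] cadj_sym by blast
      ultimately show ?thesis by blast
    qed
    from c show ?thesis unfolding cadj_def[of n k a u v]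
    proof (elim disjE conjE)
      assume "u \<in> cA k a" "v \<in> cB n k a" then show ?thesis using c1 by blast
    next
      assume "v \<in> cA k a" "u \<in> cB n k a" then show ?thesis using c1[of v u] by blast
    next
      assume "u \<in> cW k" "v \<in> cA k a" "u div k = (v - k * k) mod k" then show ?thesis using c2 by blast
    next
      assume "v \<in> cW k" "u \<in> cA k a" "v div k = (u - k * k) mod k" then show ?thesis using c2[of v u] by blast
    next
      assume "u \<in> cW k" "v \<in> cB n k a" "u mod k = (v - k * k - a) mod k" then show ?thesis using c3 by blast
    next
      assume "v \<in> cW k" "u \<in> cB n k a" "v mod k = (u - k * k - a) mod k" then show ?thesis using c3[of v u] by blast
    qed
  qed
  show ?thesis unfolding every_edge_in_triangle_def
  proof (intro allI impI)
    fix u v assume e: "{u, v} \<in> cE n k a" and "u \<noteq> v"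
    then have "v \<in> nbrs (cE n k a) u" by (simp add: nbrs_def)
    then have "cadj n k a u v" by (simp add: nbrs_cE)
    then obtain w where "cadj n k a u w" "cadj n k a v w" using main by blast
    then show "\<exists>w. {u, w} \<in> cE n k a \<and> {v, w} \<in> cE n k a" unfolding cE_def by blast
  qed
qed

lemma block_card:
  assumes "0 < k"
  shows "card {y \<in> {s..<s+b}. (y - s) mod k = j} \<le> b div k + 1"
proof -
  let ?X = "{y \<in> {s..<s+b}. (y - s) mod k = j}"
  have inj: "inj_on (\<lambda>y. (y - s) div k) ?X"
  proof (rule inj_onI)
    fix x y assume x: "x \<in> ?X" and y: "y \<in> ?X" and eq: "(x - s) div k = (y - s) div k"
    have "x - s = (x - s) div k * k + (x - s) mod k" by simp
    also have "\<dots> = (y - s) div k * k + (y - s) mod k" using eq x y by simp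
    also have "\<dots> = y - s" by simp
    finally show "x = y" using x y by auto
  qed
  have img: "(\<lambda>y. (y - s) div k) ` ?X \<subseteq> {..b div k}"
  proof
    fix z assume "z \<in> (\<lambda>y. (y - s) div k) ` ?X"
    then obtain y where y: "y \<in> ?X" "z = (y - s) div k" by auto
    then have "y - s \<le> b" by auto
    then show "z \<in> {..b div k}" using y by (simp add: div_le_mono)
  qed
  have "card ?X = card ((\<lambda>y. (y - s) div k) ` ?X)" using inj by (simp add: card_image)
  also have "\<dots> \<le> card {..b div k}" using img by (intro card_mono) auto
  finally show ?thesis by simp
qed

lemma c_disj: "x \<in> cA k a \<Longrightarrow> x \<notin> cB n k a" "x \<in> cA k a \<Longrightarrow> x \<notin> cW k" "x \<in> cB n k a \<Longrightarrow> x \<notin> cW k"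
  by (auto simp: cA_def cB_def cW_def)

lemma cadj_A: "u \<in> cA k a \<Longrightarrow> cadj n k a u w \<longleftrightarrow> (w \<in> cB n k a \<or> (w \<in> cW k \<and> w div k = (u - k*k) mod k))"
  unfolding cadj_def using c_disj by blast
lemma cadj_B: "u \<in> cB n k a \<Longrightarrow> cadj n k a u w \<longleftrightarrow> (w \<in> cA k a \<or> (w \<in> cW k \<and> w mod k = (u - k*k - a) mod k))"
  unfolding cadj_def using c_disj by blast
lemma cadj_W: "u \<in> cW k \<Longrightarrow> cadj n k a u w \<longleftrightarrow> ((w \<in> cA k a \<and> u div k = (w - k*k) mod k) \<or> (w \<in> cB n k a \<and> u mod k = (w - k*k - a) mod k))"
  unfolding cadj_def using c_disj by blast

lemma c_book:
  assumes kpos: "0 < k" and ab: "a \<le> n - k*k - a" and nn: "k*k + a \<le> n"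
    and c: "cadj n k a u v"
  shows "card ({w. cadj n k a u w} \<inter> {w. cadj n k a v w}) \<le> (n - k*k - a) div k + 1"
proof -
  let ?b = "n - k*k - a"
  let ?C = "\<lambda>u v. {w. cadj n k a u w} \<inter> {w. cadj n k a v w}"
  have bB: "cB n k a = {k*k + a ..< k*k + a + ?b}" using nn by (auto simp: cB_def)
  have Bblk: "card {y \<in> cB n k a. (y - k*k - a) mod k = j} \<le> ?b div k + 1" for j
  proof -
    have "{y \<in> cB n k a. (y - k*k - a) mod k = j} = {y \<in> {k*k + a..<k*k + a + ?b}. (y - (k*k + a)) mod k = j}"
      using bB by (simp add: diff_diff_left)
    then show ?thesis using block_card[OF kpos, of "k*k+a" ?b j] by simp
  qed
  have Ablk: "card {x \<in> cA k a. (x - k*k) mod k = j} \<le> ?b div k + 1" for j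
  proof -
    have "card {x \<in> cA k a. (x - k*k) mod k = j} \<le> a div k + 1"
      using block_card[OF kpos, of "k*k" a j] by (simp add: cA_def)
    also have "\<dots> \<le> ?b div k + 1" using ab by (simp add: div_le_mono)
    finally show ?thesis .
  qed
  have o1: "card (?C u v) \<le> ?b div k + 1" if u: "u \<in> cA k a" and v: "v \<in> cB n k a" for u v
  proof -
    have "?C u v \<subseteq> {(u - k*k) mod k * k + (v - k*k - a) mod k}"
    proof
      fix w assume w: "w \<in> ?C u v"
      then have "w \<in> cW k" "w div k = (u - k*k) mod k" "w mod k = (v - k*k - a) mod k"
        using cadj_A[OF u, of n w] cadj_B[OF v, of w] c_disj[of w] by auto
      moreover have "w = w div k * k + w mod k" by simp
      ultimately show "w \<in> {(u - k*k) mod k * k + (v - k*k - a) mod k}" by simp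
    qed
    then have "card (?C u v) \<le> card {(u - k*k) mod k * k + (v - k*k - a) mod k}"
      by (intro card_mono) auto
    then show ?thesis by simp
  qed
  have o2: "card (?C u v) \<le> ?b div k + 1" if u: "u \<in> cW k" and v: "v \<in> cA k a" for u v
  proof -
    have "?C u v \<subseteq> {y \<in> cB n k a. (y - k*k - a) mod k = u mod k}"
    proof
      fix w assume w: "w \<in> ?C u v"
      then show "w \<in> {y \<in> cB n k a. (y - k*k - a) mod k = u mod k}"
        using cadj_W[OF u, of n a w] cadj_A[OF v, of n w] c_disj[of w] by auto
    qed
    then have "card (?C u v) \<le> card {y \<in> cB n k a. (y - k*k - a) mod k = u mod k}"
      by (intro card_mono) (auto simp: cB_def)
    then show ?thesis using Bblk by (meson le_trans)
  qed
  have o3: "card (?C u v) \<le> ?b div k + 1" if u: "u \<in> cW k" and v: "v \<in> cB n k a" for u v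
  proof -
    have "?C u v \<subseteq> {x \<in> cA k a. (x - k*k) mod k = u div k}"
    proof
      fix w assume w: "w \<in> ?C u v"
      then show "w \<in> {x \<in> cA k a. (x - k*k) mod k = u div k}"
        using cadj_W[OF u, of n a w] cadj_B[OF v, of w] c_disj[of w] by auto
    qed
    then have "card (?C u v) \<le> card {x \<in> cA k a. (x - k*k) mod k = u div k}"
      by (intro card_mono) (auto simp: cA_def)
    then show ?thesis using Ablk by (meson le_trans)
  qed
  have sym: "?C u v = ?C v u" for u v by blast
  from c show ?thesis unfolding cadj_def[of n k a u v]
  proof (elim disjE conjE)
    assume "u \<in> cA k a" "v \<in> cB n k a" then show ?thesis using o1 by blast
  next
    assume "v \<in> cA k a" "u \<in> cB n k a" then show ?thesis using o1[of v u] sym[of u v] by simp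
  next
    assume "u \<in> cW k" "v \<in> cA k a" then show ?thesis using o2 by blast
  next
    assume "v \<in> cW k" "u \<in> cA k a" then show ?thesis using o2[of v u] sym[of u v] by simp
  next
    assume "u \<in> cW k" "v \<in> cB n k a" then show ?thesis using o3 by blast
  next
    assume "v \<in> cW k" "u \<in> cB n k a" then show ?thesis using o3[of v u] sym[of u v] by simp
  qed
qed

lemma card_row:
  assumes "i < k"
  shows "card {w \<in> cW k. w div k = i} = k"
proof -
  have k: "0 < k" using assms by simp
  have "{w \<in> cW k. w div k = i} = (\<lambda>j. i*k + j) ` {..<k}"
  proof
    show "{w \<in> cW k. w div k = i} \<subseteq> (\<lambda>j. i*k + j) ` {..<k}"
    proof
      fix w assume w: "w \<in> {w \<in> cW k. w div k = i}"
      have "w = i*k + w mod k" using w by (metis (mono_tags, lifting) div_mult_mod_eq mem_Collect_eq)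
      moreover have "w mod k < k" using k by simp
      ultimately show "w \<in> (\<lambda>j. i*k + j) ` {..<k}" by blast
    qed
    show "(\<lambda>j. i*k + j) ` {..<k} \<subseteq> {w \<in> cW k. w div k = i}"
    proof
      fix w assume "w \<in> (\<lambda>j. i*k + j) ` {..<k}"
      then obtain j where j: "j < k" "w = i*k + j" by auto
      have "Suc i * k \<le> k * k" using assms by (intro mult_le_mono1) simp
      then have "w < k*k" using j by simp
      moreover have "w div k = i" using j by simp
      ultimately show "w \<in> {w \<in> cW k. w div k = i}" by (simp add: cW_def)
    qed
  qed
  moreover have "inj_on (\<lambda>j. i*k + j) {..<k}" by (auto simp: inj_on_def)
  ultimately show ?thesis by (simp add: card_image)
qed

lemma card_col:
  assumes "j < k"
  shows "card {w \<in> cW k. w mod k = j} = k"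
proof -
  have k: "0 < k" using assms by simp
  have "{w \<in> cW k. w mod k = j} = (\<lambda>i. i*k + j) ` {..<k}"
  proof
    show "{w \<in> cW k. w mod k = j} \<subseteq> (\<lambda>i. i*k + j) ` {..<k}"
    proof
      fix w assume w: "w \<in> {w \<in> cW k. w mod k = j}"
      have "w = w div k * k + j" using w by (metis (mono_tags, lifting) div_mult_mod_eq mem_Collect_eq)
      moreover have "w div k < k" using w by (simp add: cW_def less_mult_imp_div_less)
      ultimately show "w \<in> (\<lambda>i. i*k + j) ` {..<k}" by blast
    qed
    show "(\<lambda>i. i*k + j) ` {..<k} \<subseteq> {w \<in> cW k. w mod k = j}"
    proof
      fix w assume "w \<in> (\<lambda>i. i*k + j) ` {..<k}"
      then obtain i where i: "i < k" "w = i*k + j" by auto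
      have "Suc i * k \<le> k * k" using i by (intro mult_le_mono1) simp
      then have "w < k*k" using i assms by simp
      moreover have "w mod k = j" using i assms by simp
      ultimately show "w \<in> {w \<in> cW k. w mod k = j}" by (simp add: cW_def)
    qed
  qed
  moreover have "inj_on (\<lambda>i. i*k + j) {..<k}" using k by (auto simp: inj_on_def)
  ultimately show ?thesis by (simp add: card_image)
qed

lemma c_edges:
  assumes kpos: "0 < k" and nn: "k*k + a \<le> n"
  shows "real a * real (n - k*k - a) + real k * (real a + real (n - k*k - a)) \<le> real (card (cE n k a))"
proof -
  let ?E = "cE n k a" and ?b = "n - k*k - a"
  let ?A = "cA k a" and ?B = "cB n k a" and ?W = "cW k"
  have g: "graph_on n ?E" by (rule c_graph[OF nn])
  interpret sg "{..<n}" "nbrs ?E" by (rule sg_graph[OF g])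
  have N: "nbrs ?E x = {v. cadj n k a x v}" for x by (rule nbrs_cE)
  have cAc: "card ?A = a" by (simp add: cA_def)
  have cBc: "card ?B = ?b" by (simp add: cB_def)
  have fA: "finite ?A" and fB: "finite ?B" and fW: "finite ?W" by (auto simp: cA_def cB_def cW_def)
  have degA: "real (card (nbrs ?E x)) = real ?b + real k" and rowA: "nbrs ?E x \<inter> ?W = {w \<in> ?W. w div k = (x - k*k) mod k}"
    if x: "x \<in> ?A" for x
  proof -
    have eq: "nbrs ?E x = ?B \<union> {w \<in> ?W. w div k = (x - k*k) mod k}"
      using cadj_A[OF x, of n] unfolding N by auto
    have "card (nbrs ?E x) = card ?B + card {w \<in> ?W. w div k = (x - k*k) mod k}"
      unfolding eq by (rule card_Un_disjoint) (use fB fW c_disj in auto)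
    also have "\<dots> = ?b + k" using cBc card_row[of "(x - k*k) mod k" k] kpos by simp
    finally show "real (card (nbrs ?E x)) = real ?b + real k" by simp
    show "nbrs ?E x \<inter> ?W = {w \<in> ?W. w div k = (x - k*k) mod k}" using eq c_disj by blast
  qed
  have degB: "real (card (nbrs ?E y)) = real a + real k" and colB: "nbrs ?E y \<inter> ?W = {w \<in> ?W. w mod k = (y - k*k - a) mod k}"
    if y: "y \<in> ?B" for y
  proof -
    have eq: "nbrs ?E y = ?A \<union> {w \<in> ?W. w mod k = (y - k*k - a) mod k}"
      using cadj_B[OF y] unfolding N by auto
    have "card (nbrs ?E y) = card ?A + card {w \<in> ?W. w mod k = (y - k*k - a) mod k}"
      unfolding eq by (rule card_Un_disjoint) (use fA fW c_disj in auto)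
    also have "\<dots> = a + k" using cAc card_col[of "(y - k*k - a) mod k" k] kpos by simp
    finally show "real (card (nbrs ?E y)) = real a + real k" by simp
    show "nbrs ?E y \<inter> ?W = {w \<in> ?W. w mod k = (y - k*k - a) mod k}" using eq c_disj by blast
  qed
  have degW: "real (card (nbrs ?E w \<inter> ?A)) + real (card (nbrs ?E w \<inter> ?B)) \<le> real (card (nbrs ?E w))" for w
  proof -
    have "card (nbrs ?E w \<inter> ?A) + card (nbrs ?E w \<inter> ?B) = card ((nbrs ?E w \<inter> ?A) \<union> (nbrs ?E w \<inter> ?B))"
      by (rule card_Un_disjoint[symmetric]) (use fA fB c_disj in auto)
    also have "\<dots> \<le> card (nbrs ?E w)" by (intro card_mono finN) auto
    finally show ?thesis by linarith
  qed
  have sWA: "(\<Sum>w\<in>?W. real (card (nbrs ?E w \<inter> ?A))) = real a * real k"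
  proof -
    have "(\<Sum>w\<in>?W. real (card (nbrs ?E w \<inter> ?A))) = (\<Sum>x\<in>?A. real (card (nbrs ?E x \<inter> ?W)))"
      by (rule swap_card[OF fW fA])
    also have "\<dots> = (\<Sum>x\<in>?A. real k)"
      by (intro sum.cong refl) (simp add: rowA card_row kpos)
    finally show ?thesis using cAc by simp
  qed
  have sWB: "(\<Sum>w\<in>?W. real (card (nbrs ?E w \<inter> ?B))) = real ?b * real k"
  proof -
    have "(\<Sum>w\<in>?W. real (card (nbrs ?E w \<inter> ?B))) = (\<Sum>x\<in>?B. real (card (nbrs ?E x \<inter> ?W)))"
      by (rule swap_card[OF fW fB])
    also have "\<dots> = (\<Sum>x\<in>?B. real k)"
      by (intro sum.cong refl) (simp add: colB card_col kpos)
    finally show ?thesis using cBc by simp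
  qed
  have part: "{..<n} = ?W \<union> ?A \<union> ?B" using nn by (auto simp: cA_def cB_def cW_def)
  have "2 * real (card ?E) = (\<Sum>x\<in>{..<n}. real (card (nbrs ?E x)))"
    using handshake[OF g] by (metis of_nat_mult of_nat_numeral of_nat_sum)
  also have "\<dots> = (\<Sum>x\<in>?W. real (card (nbrs ?E x))) + (\<Sum>x\<in>?A. real (card (nbrs ?E x))) + (\<Sum>x\<in>?B. real (card (nbrs ?E x)))"
  proof -
    have d1: "(?W \<union> ?A) \<inter> ?B = {}" and d2: "?W \<inter> ?A = {}" using c_disj by blast+
    show ?thesis unfolding part
      by (simp add: sum.union_disjoint[OF _ fB d1] sum.union_disjoint[OF fW fA d2] fW fA)
  qed
  also have "(\<Sum>x\<in>?A. real (card (nbrs ?E x))) = real a * (real ?b + real k)"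
    using cAc by (simp add: degA)
  also have "(\<Sum>x\<in>?B. real (card (nbrs ?E x))) = real ?b * (real a + real k)"
    using cBc by (simp add: degB)
  finally have "2 * real (card ?E) = (\<Sum>x\<in>?W. real (card (nbrs ?E x))) + real a * (real ?b + real k) + real ?b * (real a + real k)" .
  moreover have "(\<Sum>x\<in>?W. real (card (nbrs ?E x))) \<ge> real a * real k + real ?b * real k"
  proof -
    have "(\<Sum>x\<in>?W. real (card (nbrs ?E x \<inter> ?A)) + real (card (nbrs ?E x \<inter> ?B))) \<le> (\<Sum>x\<in>?W. real (card (nbrs ?E x)))"
      by (intro sum_mono degW)
    then show ?thesis using sWA sWB by (simp add: sum.distrib)
  qed
  ultimately show ?thesis by (simp add: algebra_simps)
qed




lemma contra:
  fixes n f Q m r e \<eta> :: real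
  assumes n0: "0 < n" and f0: "0 < f" and fe: "f \<le> \<eta> * n" and Q0: "0 \<le> Q" and Qe: "Q \<le> \<eta> * n"
    and eta: "\<eta> = e / 1000" and e0: "0 < e" and e1: "e \<le> 1/2"
    and QF: "8 * Q^2 * f = (1 - e)^2 * n^2"
    and mlow: "m > n^2/4 - f * n" and mup: "m \<le> n^2/2" and r0: "0 \<le> r"
    and V: "0 \<le> 2*m/n - 3*n/8 \<longrightarrow> r * (2*m/n - 3*n/8)^2 \<le> m*(n+Q) - 4*m^2/n"
    and O2: "r*n/4 - 3*r^2/2 \<le> 2*(n^2/4 - m)"
    and O3: "2*m - r*n - r^2 \<le> (2*Q^2/(n - 4*Q)) * (2*(n^2/4 - m) + 3*r^2/2)"
  shows False
proof -
  have eta0: "0 < \<eta>" and eta1: "\<eta> \<le> 1/2000" using eta e0 e1 by auto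
  have etan: "\<eta> * n \<le> n / 2000" using eta1 n0 mult_right_mono[of \<eta> "1/2000" n] by simp
  have fn: "f * n \<le> \<eta> * n * n" using fe n0 by (simp add: mult_right_mono)
  have m0: "0 < m"
  proof -
    have "\<eta> * n * n \<le> n * n / 2000" using eta1 n0 by (simp add: mult_right_mono)
    moreover have "0 < n * n" using n0 by simp
    moreover have "n^2 = n * n" by (simp add: power2_eq_square)
    ultimately show ?thesis using mlow fn by linarith
  qed
  define th where "th = 2*m/n - 3*n/8"
  have th: "n/10 \<le> th"
  proof -
    have "2*m > n*(n/2 - 2*f)" using mlow by (simp add: power2_eq_square algebra_simps)
    then have "2*m/n > n/2 - 2*f" using n0 by (simp add: field_simps)
    moreover have "2*f \<le> n/1000" using fe etan by linarith
    ultimately show ?thesis unfolding th_def using n0 by linarith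
  qed
  have Vb: "m*(n+Q) - 4*m^2/n \<le> (n^2/2) * (5*\<eta>*n)"
  proof -
    have "4*m/n > n - 4*f"
    proof -
      have "4*m > n*(n - 4*f)" using mlow by (simp add: power2_eq_square algebra_simps)
      then show ?thesis using n0 by (simp add: field_simps)
    qed
    have "m*(n+Q) - 4*m^2/n = m*(n + Q - 4*m/n)" by (simp add: power2_eq_square algebra_simps)
    also have "\<dots> \<le> m*(Q + 4*f)" using \<open>4*m/n > n - 4*f\<close> m0 by (intro mult_left_mono) auto
    also have "\<dots> \<le> (n^2/2)*(Q + 4*f)" using mup Q0 f0 by (intro mult_right_mono) auto
    also have "\<dots> \<le> (n^2/2)*(5*\<eta>*n)" using Qe fe by (intro mult_left_mono) auto
    finally show ?thesis .
  qed
  have rbig: "r \<le> n/8"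
  proof -
    have "r * (n/10)^2 \<le> r * th^2" using th r0 n0 by (intro mult_left_mono power_mono) auto
    also have "\<dots> \<le> (n^2/2) * (5*\<eta>*n)" using V th n0 Vb unfolding th_def by auto
    finally have "r * (n^2/100) \<le> (n^2/2) * (5*\<eta>*n)" by (simp add: power_divide)
    then have "r \<le> 250 * \<eta> * n" using n0 by (simp add: field_simps power2_eq_square)
    also have "\<dots> \<le> n/8" using eta1 n0 by (simp add: mult_right_mono)
    finally show ?thesis .
  qed
  have r32: "r < 32 * f"
  proof -
    have "r * r \<le> r * (n/8)" using rbig r0 by (rule mult_left_mono)
    then have "r^2 \<le> r * (n/8)" by (simp add: power2_eq_square)
    then have "r*n/16 \<le> 2*(n^2/4 - m)" using O2 by simp
    also have "\<dots> < 2 * (f * n)" using mlow by simp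
    finally have "r * n < 32 * f * n" by simp
    then show ?thesis using n0 by simp
  qed
  have r2: "r^2 \<le> 1024 * f^2"
  proof -
    have "r^2 \<le> (32*f)^2" using r32 r0 by (intro power_mono) auto
    then show ?thesis by (simp add: power_mult_distrib)
  qed
  have n4Q: "0 < n - 4*Q" using Qe etan n0 by linarith
  define \<kappa> where "\<kappa> = 2*Q^2/(n - 4*Q)"
  have k0: "0 \<le> \<kappa>" using n4Q by (simp add: \<kappa>_def)
  define X where "X = n^2/2 - 34*f*n - 1024*f^2"
  define Y where "Y = 2*f*n + 1536*f^2"
  have XY: "X < \<kappa> * Y"
  proof -
    have "r * n \<le> 32 * f * n" using r32 n0 by simp
    then have "X < 2*m - r*n - r^2" using mlow r2 unfolding X_def by simp
    also have "\<dots> \<le> \<kappa> * (2*(n^2/4 - m) + 3*r^2/2)" using O3 by (simp add: \<kappa>_def)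
    also have "\<dots> \<le> \<kappa> * Y" using k0 mlow r2 unfolding Y_def by (intro mult_left_mono) auto
    finally show ?thesis .
  qed
  have XY2: "X * (n - 4*Q) < (1-e)^2 * n^2 * (n + 768*f) / 2"
  proof -
    have "X * (n - 4*Q) < \<kappa> * Y * (n - 4*Q)" using XY n4Q by simp
    also have "\<dots> = 2*Q^2*Y" using n4Q by (simp add: \<kappa>_def)
    also have "\<dots> = (8*Q^2*f) * (n + 768*f) / 2" by (simp add: Y_def power2_eq_square algebra_simps)
    finally show ?thesis using QF by simp
  qed
  have Xlow: "n^2 * (1/2 - 35*\<eta>) \<le> X"
  proof -
    have "f^2 \<le> (\<eta>*n)^2" using fe f0 by (intro power_mono) auto
    then have "1024*f^2 \<le> 1024*\<eta>^2*n^2" by (simp add: power_mult_distrib)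
    also have "\<dots> \<le> \<eta>*n^2"
    proof -
      have "\<eta> * \<eta> \<le> (1/2000) * \<eta>" using eta0 eta1 by (intro mult_right_mono) auto
      then have "1024*\<eta>^2 \<le> \<eta>" using eta0 by (simp add: power2_eq_square)
      then show ?thesis by (simp add: mult_right_mono)
    qed
    finally have a: "1024*f^2 \<le> \<eta>*n^2" .
    have b: "34*f*n \<le> 34*\<eta>*n^2" using fn by (simp add: power2_eq_square)
    show ?thesis unfolding X_def using a b by (simp add: algebra_simps)
  qed
  have L0: "0 \<le> 1/2 - 35*\<eta>" using eta1 by simp
  have "n^3 * (1/2 - 37*\<eta>) \<le> n^3 * ((1/2 - 35*\<eta>) * (1 - 4*\<eta>))"
    using eta0 n0 by (intro mult_left_mono) (auto simp: algebra_simps)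
  also have "\<dots> = (n^2 * (1/2 - 35*\<eta>)) * (n * (1 - 4*\<eta>))" by (simp add: power2_eq_square power3_eq_cube)
  also have "\<dots> \<le> X * (n - 4*Q)"
  proof (intro mult_mono)
    show "n^2 * (1/2 - 35*\<eta>) \<le> X" by (rule Xlow)
    show "n * (1 - 4*\<eta>) \<le> n - 4*Q" using Qe by (simp add: algebra_simps)
    have "0 \<le> n^2 * (1/2 - 35*\<eta>)" using L0 by simp
    then show "0 \<le> X" using Xlow by linarith
    show "0 \<le> n * (1 - 4*\<eta>)" using n0 eta1 by simp
  qed
  also have "\<dots> < (1-e)^2 * n^2 * (n + 768*f) / 2" by (rule XY2)
  also have "\<dots> \<le> (1-e) * n^2 * (n + 768*(\<eta>*n)) / 2"
  proof -
    have "(1-e) * (1-e) \<le> 1 * (1 - e)" using e0 e1 by (intro mult_right_mono) auto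
    then have "(1-e)^2 \<le> 1 - e" by (simp add: power2_eq_square)
    moreover have "n + 768*f \<le> n + 768*(\<eta>*n)" using fe by simp
    ultimately have "(1-e)^2 * (n + 768*f) \<le> (1-e) * (n + 768*(\<eta>*n))"
      using f0 n0 e1 by (intro mult_mono) auto
    then have "(1-e)^2 * (n + 768*f) * n^2 \<le> (1-e) * (n + 768*(\<eta>*n)) * n^2" by (simp add: mult_right_mono)
    then show ?thesis by (intro divide_right_mono) (simp_all add: mult.commute mult.left_commute)
  qed
  also have "\<dots> = n^3 * ((1-e) * (1 + 768*\<eta>) / 2)" by (simp add: power2_eq_square power3_eq_cube algebra_simps)
  finally have "n^3 * (1/2 - 37*\<eta>) < n^3 * ((1-e) * (1 + 768*\<eta>) / 2)" .
  then have "1/2 - 37*\<eta> < (1-e) * (1 + 768*\<eta>) / 2" using n0 by simp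
  moreover have "(1-e) * (1 + 768*\<eta>) / 2 \<le> (1-e)/2 + 384*\<eta>"
  proof -
    have "(1-e) * (1 + 768*\<eta>) / 2 = (1-e)/2 + 384*\<eta> - 384*(e*\<eta>)" by (simp add: field_simps)
    moreover have "0 \<le> e*\<eta>" using e0 eta0 by simp
    ultimately show ?thesis by linarith
  qed
  ultimately have "1/2 - 37*\<eta> < (1-e)/2 + 384*\<eta>" by (rule less_le_trans)
  then show False using eta e0 by (simp add: field_simps)
qed

lemma TG_fin: "finite (TG n f)"
proof -
  have "TG n f \<subseteq> Pow (Pow {0..<n})" by (auto simp: TG_def graph_on_def)
  then show ?thesis by (rule finite_subset) simp
qed

lemma bound_eq:
  fixes c :: real and n :: nat
  assumes "0 < n"
  shows "1/(2*sqrt 2) * real n powr (1 - c/2) = real n / (2 * sqrt (2 * real n powr c))"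
proof -
  have n0: "0 < real n" using assms by simp
  have a: "sqrt (2 * real n powr c) = sqrt 2 * real n powr (c/2)"
    by (simp add: real_sqrt_mult powr_half_sqrt_powr)
  have b: "real n powr (1 - c/2) = real n / real n powr (c/2)"
    using n0 by (simp add: powr_diff)
  show ?thesis unfolding a b by (simp add: field_simps)
qed

lemma part1_n:
  fixes c :: real and n :: nat
  defines "f \<equiv> real n powr c"
  assumes f9: "9 \<le> 2*f" and f8: "8*f \<le> real n" and n64: "64 \<le> n"
  shows "TG n (\<lambda>k. real k powr c) \<noteq> {} \<and>
         real (gamma n (\<lambda>k. real k powr c)) < 1/(2*sqrt 2) * real n powr (1 - c/2)"
proof -
  define s where "s = sqrt (2*f)"
  have f0: "0 \<le> f" by (simp add: f_def)
  have s2: "s^2 = 2*f" using f0 by (simp add: s_def)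
  have s3: "3 \<le> s"
  proof -
    have "sqrt 9 \<le> s" unfolding s_def using f9 by (rule real_sqrt_le_mono)
    moreover have "sqrt 9 = (3::real)" by (simp add: real_sqrt_unique)
    ultimately show ?thesis by simp
  qed
  define k where "k = nat \<lfloor>s\<rfloor> + 1"
  define K where "K = real k"
  have fl0: "0 \<le> \<lfloor>s\<rfloor>" using s3 by simp
  have Kfl: "K = of_int \<lfloor>s\<rfloor> + 1" using fl0 by (simp add: K_def k_def)
  have K1: "K - 1 \<le> s" and K2: "s < K" using floor_correct[of s] Kfl by auto
  have K4: "4 \<le> K" using K1 K2 s3 Kfl
  proof -
    have "3 \<le> \<lfloor>s\<rfloor>" using s3 by (simp add: le_floor_iff)
    then show ?thesis using Kfl by simp
  qed
  have kpos: "0 < k" by (simp add: k_def)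
  have ss: "s \<le> 2*f/3"
  proof -
    have "3 * s \<le> s * s" using s3 by (intro mult_right_mono) auto
    then show ?thesis using s2 by (simp add: power2_eq_square)
  qed
  have nbig: "(s+2)^2 \<le> real n"
  proof -
    have "(s+2)^2 = 2*f + 4*s + 4" using s2 by (simp add: power2_eq_square algebra_simps)
    also have "\<dots> \<le> 14*f/3 + 4" using ss by simp
    also have "\<dots> \<le> real n" using f8 n64 by simp
    finally show ?thesis .
  qed
  have Ks: "K^2 + 2*K < real n"
  proof -
    have "K \<le> s + 1" using K1 by simp
    then have "K^2 \<le> (s+1)^2" using K4 by (intro power_mono) auto
    then have "K^2 + 2*K \<le> (s+2)^2 - 1" using \<open>K \<le> s + 1\<close> by (simp add: power2_eq_square algebra_simps)
    then show ?thesis using nbig by simp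
  qed
  have kn: "k*k + 2*k \<le> n"
  proof -
    have "real (k*k + 2*k) < real n" using Ks by (simp add: K_def power2_eq_square)
    then show ?thesis by linarith
  qed
  define a where "a = (n - k*k) div 2"
  define b where "b = n - k*k - a"
  have ka: "k \<le> a" using kn by (simp add: a_def)
  have ab: "a \<le> b" by (simp add: a_def b_def)
  have ba1: "b \<le> a + 1" by (simp add: a_def b_def)
  have kb: "k \<le> n - k*k - a" using ka ab by (simp add: b_def)
  have nn: "k*k + a \<le> n" using kn ka by (simp add: a_def)
  have abn: "a + b = n - k*k" using nn by (simp add: b_def)
  define E where "E = cE n k a"
  have g: "graph_on n E" unfolding E_def by (rule c_graph[OF nn])
  have t: "every_edge_in_triangle E" unfolding E_def by (rule c_tri[OF kpos ka kb nn])
  have edges: "real a * real b + real k * (real a + real b) \<le> real (card E)"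
    using c_edges[OF kpos nn] by (simp add: E_def b_def)
  define A where "A = real a"
  define B where "B = real b"
  define T where "T = A + B"
  have "n = a + b + k*k" using abn nn by linarith
  then have Tn: "real n = T + K^2" unfolding T_def A_def B_def K_def power2_eq_square
    by (metis of_nat_add of_nat_mult)
  have AB4: "T^2 - 1 \<le> 4*A*B"
  proof -
    have "B - A \<le> 1" "0 \<le> B - A" using ab ba1 by (auto simp: A_def B_def)
    then have "(B - A)^2 \<le> 1" by (simp add: power_le_one)
    moreover have "T^2 = 4*A*B + (B-A)^2" by (simp add: T_def power2_eq_square algebra_simps)
    ultimately show ?thesis by linarith
  qed
  have c1: "1/2 \<le> f + K - K^2/2"
  proof -
    have "(K-1)^2 \<le> s^2" using K1 K4 by (intro power_mono) auto
    then show ?thesis using s2 by (simp add: power2_eq_square algebra_simps)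
  qed
  have c2: "0 \<le> f - K^2/4"
  proof -
    have "K^2 \<le> (s+1)^2" using K1 K4 by (intro power_mono) auto
    also have "\<dots> = 2*f + 2*s + 1" using s2 by (simp add: power2_eq_square algebra_simps)
    finally show ?thesis using ss f9 by simp
  qed
  have T1: "1 \<le> T" using ka kpos by (simp add: T_def A_def B_def)
  have mbig: "real (card E) > real n^2/4 - f * real n"
  proof -
    have "real n^2/4 - f * real n = (T + K^2)^2/4 - f*(T + K^2)" using Tn by simp
    also have "\<dots> = T^2/4 - T*(f + K - K^2/2) - K^2*(f - K^2/4) + K*T"
      by (simp add: power2_eq_square algebra_simps)
    also have "\<dots> \<le> T^2/4 - T/2 - 0 + K*T"
    proof -
      have "T * (1/2) \<le> T * (f + K - K^2/2)" using c1 T1 by (intro mult_left_mono) auto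
      moreover have "0 \<le> K^2*(f - K^2/4)" using c2 by simp
      ultimately show ?thesis by simp
    qed
    also have "\<dots> < A*B + K*T" using AB4 T1 by simp
    also have "\<dots> \<le> real (card E)" using edges by (simp add: A_def B_def K_def T_def)
    finally show ?thesis .
  qed
  have mpos: "real (card E) > 0"
  proof -
    have "0 < A * B" using ka ab kpos by (simp add: A_def B_def)
    moreover have "0 \<le> K * T" using K4 T1 by simp
    ultimately show ?thesis using edges unfolding A_def B_def K_def T_def by linarith
  qed
  have ETG: "E \<in> TG n (\<lambda>k. real k powr c)"
    unfolding TG_def using g t mbig mpos by (simp add: f_def)
  have bkE: "bk E \<le> b div k + 1"
  proof (rule bk_le[OF g])
    fix u v assume "{u, v} \<in> E"
    then have "v \<in> nbrs (cE n k a) u" by (simp add: nbrs_def E_def)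
    then have c: "cadj n k a u v" by (simp add: nbrs_cE)
    show "card (nbrs E u \<inter> nbrs E v) \<le> b div k + 1"
      using c_book[OF kpos _ nn c] ab unfolding E_def nbrs_cE b_def by simp
  qed
  have gam: "gamma n (\<lambda>k. real k powr c) \<le> bk E"
    unfolding gamma_def using ETG TG_fin by (intro Min_le) auto
  have "real (b div k + 1) \<le> B / K + 1"
  proof -
    have "b div k * k \<le> b" using div_mult_mod_eq[of b k] by linarith
    then have "real (b div k) * real k \<le> real b" by (metis of_nat_le_iff of_nat_mult)
    then have "real (b div k) \<le> real b / real k" using kpos by (simp add: field_simps)
    then show ?thesis by (simp add: B_def K_def)
  qed
  also have "\<dots> \<le> (T + 1)/(2*K) + 1"
  proof -
    have "2*B \<le> T + 1" using ba1 by (simp add: T_def A_def B_def)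
    then have "B / K \<le> (T + 1) / (2 * K)" using K4 by (simp add: field_simps)
    then show ?thesis by simp
  qed
  also have "\<dots> \<le> real n / (2*K)"
  proof -
    have "K*K \<ge> 4*K" using K4 by (intro mult_right_mono) auto
    then have "T + 1 + 2*K \<le> real n" using Tn K4 unfolding power2_eq_square by linarith
    then have "(T + 1 + 2*K) / (2*K) \<le> real n / (2*K)" using K4 by (intro divide_right_mono) auto
    moreover have "(T + 1 + 2*K) / (2*K) = (T + 1)/(2*K) + 1" using K4 by (simp add: field_simps)
    ultimately show ?thesis by simp
  qed
  also have "\<dots> < real n / (2*s)"
    using K2 s3 n64 by (intro divide_strict_left_mono) auto
  also have "\<dots> = 1/(2*sqrt 2) * real n powr (1 - c/2)"
    using bound_eq[of n c] n64 by (simp add: s_def f_def)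
  finally have "real (b div k + 1) < 1/(2*sqrt 2) * real n powr (1 - c/2)" .
  moreover have "real (gamma n (\<lambda>k. real k powr c)) \<le> real (b div k + 1)"
    using gam bkE by simp
  ultimately show ?thesis using ETG by auto
qed

lemma part2_n:
  fixes c e :: real and n :: nat
  defines "f \<equiv> real n powr c" and "Q \<equiv> (1-e)/(2*sqrt 2) * real n powr (1 - c/2)"
    and "\<eta> \<equiv> e/1000"
  assumes e0: "0 < e" and e1: "e \<le> 1/2" and n0: "0 < n" and fe: "f \<le> \<eta> * real n"
    and Qe: "Q \<le> \<eta> * real n" and Q3: "2 * (real n)^2 \<le> Q^3"
    and ne: "TG n (\<lambda>k. real k powr c) \<noteq> {}"
  shows "Q < real (gamma n (\<lambda>k. real k powr c))"
proof (rule ccontr)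
  assume "\<not> Q < real (gamma n (\<lambda>k. real k powr c))"
  then have gQ: "real (gamma n (\<lambda>k. real k powr c)) \<le> Q" by simp
  have "gamma n (\<lambda>k. real k powr c) \<in> bk ` TG n (\<lambda>k. real k powr c)"
    unfolding gamma_def using ne TG_fin by (intro Min_in) auto
  then obtain E where ETG: "E \<in> TG n (\<lambda>k. real k powr c)" and bkE: "bk E = gamma n (\<lambda>k. real k powr c)"
    by auto
  have g: "graph_on n E" and t: "every_edge_in_triangle E"
    and mlow: "real (card E) > real n^2/4 - f * real n"
    using ETG unfolding TG_def f_def by auto
  have nr: "0 < real n" using n0 by simp
  have eta1: "\<eta> \<le> 1/2000" using e1 by (simp add: \<eta>_def)
  have book: "\<And>u v. {u, v} \<in> E \<Longrightarrow> real (card (nbrs E u \<inter> nbrs E v)) \<le> Q"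
  proof -
    fix u v assume uv: "{u, v} \<in> E"
    have "card (nbrs E u \<inter> nbrs E v) \<le> bk E" by (rule bk_ge[OF g uv])
    then have "real (card (nbrs E u \<inter> nbrs E v)) \<le> real (bk E)" by simp
    then show "real (card (nbrs E u \<inter> nbrs E v)) \<le> Q" using gQ bkE by simp
  qed
  have qs: "24 * Q < real n"
  proof -
    have "\<eta> * real n \<le> (1/2000) * real n" using eta1 nr by (intro mult_right_mono) auto
    then show ?thesis using Qe nr by linarith
  qed
  have f0: "0 < f" using n0 by (simp add: f_def)
  have Q0: "0 \<le> Q" using e1 by (simp add: Q_def)
  have QF: "8 * Q^2 * f = (1 - e)^2 * (real n)^2"
  proof -
    have p1: "(real n powr (1 - c/2))^2 * real n powr c = (real n)^2"
    proof -
      have "real n powr ((1 - c/2) + (1 - c/2) + c) = real n powr (1-c/2) * real n powr (1-c/2) * real n powr c"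
        by (simp only: powr_add)
      moreover have "(1 - c/2) + (1 - c/2) + c = 2" by simp
      moreover have "real n powr (2::real) = (real n)^2" by simp
      ultimately show ?thesis by (simp add: power2_eq_square)
    qed
    have q2: "Q^2 = ((1-e)/(2*sqrt 2))^2 * (real n powr (1 - c/2))^2"
      unfolding Q_def by (rule power_mult_distrib)
    have c8: "((1-e)/(2*sqrt 2))^2 = (1-e)^2 / 8"
      by (simp add: power_divide power_mult_distrib)
    have "8 * Q^2 * f = (1-e)^2 * ((real n powr (1 - c/2))^2 * real n powr c)"
      unfolding q2 c8 f_def by simp
    also have "\<dots> = (1 - e)^2 * (real n)^2" using p1 by simp
    finally show ?thesis .
  qed
  have book': "\<forall>u v. {u, v} \<in> E \<longrightarrow> real (card (nbrs E u \<inter> nbrs E v)) \<le> Q"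
    using book by blast
  show False using lower_graph[OF g t book' qs Q3]
    apply (elim exE conjE)
    apply (rule contra[OF nr f0 fe Q0 Qe _ e0 e1 QF mlow m_le[OF g]])
        apply (simp add: \<eta>_def)
       apply assumption+
    done
qed

lemma ev_small:
  fixes a \<eta> :: real
  assumes "a < 0" "0 < \<eta>"
  shows "eventually (\<lambda>n. real n powr a \<le> \<eta>) sequentially"
proof -
  have "((\<lambda>n. real n powr a) \<longlongrightarrow> 0) sequentially"
    by (rule tendsto_neg_powr[OF assms(1) filterlim_real_sequentially])
  then have "eventually (\<lambda>n. real n powr a < \<eta>) sequentially"
    using assms(2) by (rule order_tendstoD(2))
  then show ?thesis by (rule eventually_mono) simp
qed

lemma powr_inv_bound:
  fixes x a \<eta> :: real
  assumes "0 < x" "x powr (-a) \<le> \<eta>" "0 < \<eta>"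
  shows "1/\<eta> \<le> x powr a"
proof -
  have p: "0 < x powr (-a)" using assms by simp
  have "x powr a = inverse (x powr (-a))" using powr_minus[of x "-a"] by simp
  moreover have "inverse \<eta> \<le> inverse (x powr (-a))" using assms p by (intro le_imp_inverse_le) auto
  ultimately show ?thesis by (simp add: inverse_eq_divide)
qed

lemma powr_split:
  fixes x a :: real
  assumes "0 < x"
  shows "x powr a = x powr (a - 1) * x"
proof -
  have "x powr a = x powr ((a - 1) + 1)" by simp
  also have "\<dots> = x powr (a - 1) * x" using assms by (simp only: powr_add powr_one_gt_zero_iff) simp
  finally show ?thesis .
qed

lemma ev_part1:
  fixes c :: real
  assumes "0 < c" "c < 1"
  shows "eventually (\<lambda>n. 9 \<le> 2 * real n powr c \<and> 8 * real n powr c \<le> real n \<and> 64 \<le> n) sequentially"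
proof -
  have e1: "eventually (\<lambda>n. real n powr (-c) \<le> 2/9) sequentially" using assms by (intro ev_small) auto
  have e2: "eventually (\<lambda>n. real n powr (c - 1) \<le> 1/8) sequentially" using assms by (intro ev_small) auto
  have e3: "eventually (\<lambda>n. 64 \<le> n) sequentially" by (rule eventually_ge_at_top)
  show ?thesis using e1 e2 e3
  proof (eventually_elim)
    case (elim n)
    then have n0: "0 < real n" by simp
    have "1/(2/9) \<le> real n powr c" by (rule powr_inv_bound[OF n0]) (use elim in auto)
    moreover have "8 * real n powr c \<le> real n"
    proof -
      have "real n powr c = real n powr (c - 1) * real n" by (rule powr_split[OF n0])
      also have "\<dots> \<le> 1/8 * real n" using elim n0 by (intro mult_right_mono) auto
      finally show ?thesis by simp
    qed
    ultimately show ?case using elim by simp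
  qed
qed

theorem corollary10:
  shows "(\<forall>c::real. 0 < c \<and> c < 1 \<longrightarrow>
           (\<forall>\<^sub>F n in sequentially.
              real (gamma n (\<lambda>k. real k powr c)) < 1 / (2 * sqrt 2) * real n powr (1 - c / 2)))
       \<and> (\<forall>(c::real) (\<epsilon>::real). 0 < c \<and> c < 2 / 5 \<and> 0 < \<epsilon> \<longrightarrow>
           (\<forall>\<^sub>F n in sequentially.
              real (gamma n (\<lambda>k. real k powr c)) > (1 - \<epsilon>) / (2 * sqrt 2) * real n powr (1 - c / 2)))"
proof (intro conjI allI impI)
  fix c :: real assume c: "0 < c \<and> c < 1"
  show "\<forall>\<^sub>F n in sequentially.
          real (gamma n (\<lambda>k. real k powr c)) < 1 / (2 * sqrt 2) * real n powr (1 - c / 2)"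
    using ev_part1[of c] c
    by (auto elim!: eventually_mono dest: part1_n)
next
  fix c \<epsilon> :: real assume c: "0 < c \<and> c < 2 / 5 \<and> 0 < \<epsilon>"
  define e where "e = min \<epsilon> (1/2)"
  define \<eta> where "\<eta> = e / 1000"
  define K where "K = (1-e)/(2*sqrt 2)"
  have e0: "0 < e" and e1: "e \<le> 1/2" and ee: "e \<le> \<epsilon>" using c by (auto simp: e_def)
  have eta0: "0 < \<eta>" using e0 by (simp add: \<eta>_def)
  have K0: "0 < K" using e1 by (simp add: K_def)
  have ev1: "eventually (\<lambda>n. real n powr (c - 1) \<le> \<eta>) sequentially" using c eta0 by (intro ev_small) auto
  have ev2: "eventually (\<lambda>n. real n powr (-c/2) \<le> \<eta>/K) sequentially" using c eta0 K0 by (intro ev_small) auto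
  have ev3: "eventually (\<lambda>n. real n powr (-(1 - 3*c/2)) \<le> K^3/2) sequentially" using c K0 by (intro ev_small) auto
  have ev4: "eventually (\<lambda>n. 9 \<le> 2 * real n powr c \<and> 8 * real n powr c \<le> real n \<and> 64 \<le> n) sequentially"
    using c by (intro ev_part1) auto
  show "\<forall>\<^sub>F n in sequentially.
          real (gamma n (\<lambda>k. real k powr c)) > (1 - \<epsilon>) / (2 * sqrt 2) * real n powr (1 - c / 2)"
    using ev1 ev2 ev3 ev4
  proof (eventually_elim)
    case (elim n)
    have n0: "0 < n" using elim by simp
    have nr: "0 < real n" using n0 by simp
    have ne: "TG n (\<lambda>k. real k powr c) \<noteq> {}" using part1_n[where c=c and n=n] elim by auto
    have fe: "real n powr c \<le> \<eta> * real n"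
    proof -
      have "real n powr c = real n powr (c - 1) * real n" by (rule powr_split[OF nr])
      also have "\<dots> \<le> \<eta> * real n" using elim nr by (intro mult_right_mono) auto
      finally show ?thesis .
    qed
    have Qe: "K * real n powr (1 - c/2) \<le> \<eta> * real n"
    proof -
      have "real n powr (1 - c/2) = real n powr (-c/2) * real n" using powr_split[OF nr, of "1 - c/2"] by simp
      then have "K * real n powr (1 - c/2) = K * real n powr (-c/2) * real n" by simp
      also have "\<dots> \<le> K * (\<eta>/K) * real n" using elim nr K0 by (intro mult_right_mono mult_left_mono) auto
      also have "\<dots> = \<eta> * real n" using K0 by simp
      finally show ?thesis .
    qed
    have Q3: "2 * (real n)^2 \<le> (K * real n powr (1 - c/2))^3"
    proof -
      have b: "1/(K^3/2) \<le> real n powr (1 - 3*c/2)" by (rule powr_inv_bound[OF nr]) (use elim K0 in auto)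
      have "(real n powr (1 - c/2))^3 = real n powr ((1 - c/2) + (1 - c/2) + (1 - c/2))"
        by (simp only: powr_add power3_eq_cube)
      also have "(1 - c/2) + (1 - c/2) + (1 - c/2) = 2 + (1 - 3*c/2)" by simp
      also have "real n powr (2 + (1 - 3*c/2)) = real n powr 2 * real n powr (1 - 3*c/2)"
        by (simp only: powr_add)
      also have "real n powr (2::real) = (real n)^2" by simp
      finally have p3: "(real n powr (1 - c/2))^3 = (real n)^2 * real n powr (1 - 3*c/2)" .
      have "2 * (real n)^2 = K^3 * ((real n)^2 * (1/(K^3/2)))" using K0 by simp
      also have "\<dots> \<le> K^3 * ((real n)^2 * real n powr (1 - 3*c/2))"
        using b K0 by (intro mult_left_mono) auto
      also have "\<dots> = (K * real n powr (1 - c/2))^3" using p3 by (simp add: power_mult_distrib)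
      finally show ?thesis .
    qed
    have "K * real n powr (1 - c/2) < real (gamma n (\<lambda>k. real k powr c))"
      using part2_n[OF e0 e1 n0 _ _ _ ne] fe Qe Q3 unfolding K_def \<eta>_def by simp
    moreover have "(1 - \<epsilon>) / (2 * sqrt 2) * real n powr (1 - c / 2) \<le> K * real n powr (1 - c/2)"
      unfolding K_def using ee by (intro mult_right_mono divide_right_mono) auto
    ultimately show ?case by simp
  qed
qed


end
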